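(* Let $b=(b_1,\ldots,b_n)$, $\alpha=(\alpha_1,\ldots,\alpha_n)$ and $\beta=(\beta_1,\ldots,\beta_n)$ be vectors of nonnegative integers, and let $d$ be an integer, such that $\alpha_1\le\alpha_2\le\cdots\le\alpha_n=d$, $\beta_1\le\beta_2\le\cdots\le\beta_n=d$, $\alpha_i\le\beta_i$ for all $i$, $\alpha_1=0$ and $\beta_1=b_1$. Let $I\subseteq S=K[x_1,\ldots,x_n]$ be the PLP-polymatroidal ideal of type $(\mathbf{0},b\mid\alpha,\beta)$, i.e. the ideal generated by all monomials $x^u=x_1^{u_1}\cdots x_n^{u_n}$ with $u\in\mathbb{Z}_{\ge0}^n$ satisfying $0\le u_i\le b_i$ and $\alpha_i\le u_1+\cdots+u_i\le\beta_i$ for $i=1,\ldots,n$. Then $\mathrm{Soc}^*(I)$ is generated, as a module over the Rees ring $R(I)$, by homogeneous elements of degree $<n$, and $\mathrm{Soc}(I)$ is generated, as an $\mathcal{F}(I)$-module, by homogeneous elements of degree $<n$.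
   Context: $K$ is a field and $\mathfrak{m}=(x_1,\ldots,x_n)$. The ideal $I$ is polymatroidal, generated in degree $d$, and all its powers $I^m$ are generated in degree $md$ and have linear resolutions. For each $m\ge1$, $\mathrm{soc}(I^m)$ denotes the ideal generated by all monomials $u$ of degree $md-1$ with $x_iu\in I^m$ for all $i$; one has $(I^m:\mathfrak{m})=I^m+\mathrm{soc}(I^m)$. The Rees ring is $R(I)=\bigoplus_{m\ge0}I^m$, and $\mathrm{Soc}^*(I)=\bigoplus_{m\ge1}\mathrm{soc}(I^m)$, graded with $\mathrm{soc}(I^m)$ in degree $m$, is a graded $R(I)$-module, elements of $I^r$ mapping $\mathrm{soc}(I^m)$ into $\mathrm{soc}(I^{m+r})$. The fiber cone is $\mathcal{F}(I)=\bigoplus_{m\ge0}I^m/\mathfrak{m}I^m$, and $\mathrm{Soc}(I)=\bigoplus_{m\ge0}(I^m:\mathfrak{m})/I^m$ is a graded $\mathcal{F}(I)$-module with $(I^m:\mathfrak{m})/I^m$ in degree $m$. *)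

theory Defs
  imports "HOL-Library.Poly_Mapping"
begin

text \<open>The ring S = K[x_1,...,x_n] is the subring of polynomials involving only the
variables with index in {0..<n} (variable x_(i+1) of the paper is index i).\<close>

type_synonym 'k mpoly = "(nat \<Rightarrow>\<^sub>0 nat) \<Rightarrow>\<^sub>0 'k"

definition Sring :: "nat \<Rightarrow> 'k::field mpoly set" where
  "Sring n = {p. \<forall>u \<in> Poly_Mapping.keys p. Poly_Mapping.keys u \<subseteq> {..<n}}"

definition monom :: "(nat \<Rightarrow>\<^sub>0 nat) \<Rightarrow> 'k::field mpoly" where
  "monom u = Poly_Mapping.single u 1"

definition var :: "nat \<Rightarrow> 'k::field mpoly" where
  "var i = monom (Poly_Mapping.single i 1)"

definition mdeg :: "(nat \<Rightarrow>\<^sub>0 nat) \<Rightarrow> nat" where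
  "mdeg u = (\<Sum>i\<in>Poly_Mapping.keys u. Poly_Mapping.lookup u i)"

definition ideal_gen :: "nat \<Rightarrow> 'k::field mpoly set \<Rightarrow> 'k mpoly set" where
  "ideal_gen n G = {(\<Sum>g\<in>F. c g * g) | F c. finite F \<and> F \<subseteq> G \<and> (\<forall>g\<in>F. c g \<in> Sring n)}"

definition ideal_mult :: "nat \<Rightarrow> 'k::field mpoly set \<Rightarrow> 'k mpoly set \<Rightarrow> 'k mpoly set" where
  "ideal_mult n A B = ideal_gen n {a * b | a b. a \<in> A \<and> b \<in> B}"

fun ideal_pow :: "nat \<Rightarrow> 'k::field mpoly set \<Rightarrow> nat \<Rightarrow> 'k mpoly set" where
  "ideal_pow n A 0 = Sring n"
| "ideal_pow n A (Suc m) = ideal_mult n (ideal_pow n A m) A"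

definition ideal_colon :: "nat \<Rightarrow> 'k::field mpoly set \<Rightarrow> 'k mpoly set \<Rightarrow> 'k mpoly set" where
  "ideal_colon n A B = {p \<in> Sring n. \<forall>b\<in>B. p * b \<in> A}"

definition max_ideal :: "nat \<Rightarrow> 'k::field mpoly set" where
  "max_ideal n = ideal_gen n {var i | i. i < n}"

text \<open>soc(I^m): generated by monomials u of degree m*d - 1 with x_i u in I^m for all i
 (for m*d = 0 there are no such monomials)\<close>
definition soc :: "nat \<Rightarrow> nat \<Rightarrow> 'k::field mpoly set \<Rightarrow> nat \<Rightarrow> 'k mpoly set" where
  "soc n d I m = ideal_gen n {monom u | u. Poly_Mapping.keys u \<subseteq> {..<n} \<and> mdeg u + 1 = m * d
       \<and> (\<forall>i<n. var i * monom u \<in> ideal_pow n I m)}"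

definition plp_ideal :: "nat \<Rightarrow> (nat \<Rightarrow> nat) \<Rightarrow> (nat \<Rightarrow> nat) \<Rightarrow> (nat \<Rightarrow> nat) \<Rightarrow> 'k::field mpoly set" where
  "plp_ideal n b \<alpha> \<beta> = ideal_gen n {monom u | u. Poly_Mapping.keys u \<subseteq> {..<n} \<and>
      (\<forall>i<n. Poly_Mapping.lookup u i \<le> b i \<and> \<alpha> i \<le> (\<Sum>j\<le>i. Poly_Mapping.lookup u j) \<and> (\<Sum>j\<le>i. Poly_Mapping.lookup u j) \<le> \<beta> i)}"

text \<open>Soc*(I) = (+)_{m>=1} soc(I^m) is generated as an R(I)-module by homogeneous elements
 of degree < N: every graded piece soc(I^m) is the sum of the images
 I^(m-k) soc(I^k) of the pieces of degree k < N (and 1 <= k <= m).\<close>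
definition Soc_star_gen_below :: "nat \<Rightarrow> nat \<Rightarrow> 'k::field mpoly set \<Rightarrow> nat \<Rightarrow> bool" where
  "Soc_star_gen_below n d I N \<longleftrightarrow> (\<forall>m\<ge>1. soc n d I m =
      ideal_gen n (\<Union>k\<in>{k. 1 \<le> k \<and> k \<le> m \<and> k < N}. ideal_mult n (ideal_pow n I (m - k)) (soc n d I k)))"

text \<open>Soc(I) = (+)_{m>=0} (I^m : m)/I^m is generated as an F(I)-module by homogeneous
 elements of degree < N: for every m, (I^m : m) = I^m + sum_{k<N, k<=m} I^(m-k) (I^k : m)
 (the degree-0 piece is zero; mI^(m-k) acts by zero modulo I^m).\<close>
definition Soc_gen_below :: "nat \<Rightarrow> 'k::field mpoly set \<Rightarrow> nat \<Rightarrow> bool" where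
  "Soc_gen_below n I N \<longleftrightarrow> (\<forall>m\<ge>1. ideal_colon n (ideal_pow n I m) (max_ideal n) =
      ideal_gen n (ideal_pow n I m \<union> (\<Union>k\<in>{k. 1 \<le> k \<and> k \<le> m \<and> k < N}.
         ideal_mult n (ideal_pow n I (m - k)) (ideal_colon n (ideal_pow n I k) (max_ideal n)))))"

end

theory Submission
  imports Defs
begin

definition NN :: "nat \<Rightarrow> (nat \<Rightarrow>\<^sub>0 nat) set" where "NN n = {v. Poly_Mapping.keys v \<subseteq> {..<n}}"
definition MI :: "(nat \<Rightarrow>\<^sub>0 nat) set \<Rightarrow> 'k::field mpoly set" where "MI U = {p. Poly_Mapping.keys p \<subseteq> U}"
definition lev :: "(nat \<Rightarrow>\<^sub>0 nat) \<Rightarrow> (nat \<Rightarrow>\<^sub>0 nat) \<Rightarrow> bool" where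
  "lev v w \<longleftrightarrow> (\<forall>i. Poly_Mapping.lookup v i \<le> Poly_Mapping.lookup w i)"
definition upc :: "nat \<Rightarrow> (nat \<Rightarrow>\<^sub>0 nat) set \<Rightarrow> bool" where
  "upc n U \<longleftrightarrow> U \<subseteq> NN n \<and> (\<forall>v\<in>U. \<forall>w\<in>NN n. lev v w \<longrightarrow> w \<in> U)"
definition Up :: "nat \<Rightarrow> (nat \<Rightarrow>\<^sub>0 nat) set \<Rightarrow> (nat \<Rightarrow>\<^sub>0 nat) set" where
  "Up n E = {w \<in> NN n. \<exists>e\<in>E. lev e w}"
definition msum :: "(nat \<Rightarrow>\<^sub>0 nat) set \<Rightarrow> (nat \<Rightarrow>\<^sub>0 nat) set \<Rightarrow> (nat \<Rightarrow>\<^sub>0 nat) set" where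
  "msum U V = {u + v | u v. u \<in> U \<and> v \<in> V}"

lemma keys_add_nat: "Poly_Mapping.keys (v + w) = Poly_Mapping.keys v \<union> Poly_Mapping.keys (w::nat \<Rightarrow>\<^sub>0 nat)"
  by (auto simp: in_keys_iff lookup_add)

lemma lev_refl[simp]: "lev v v" by (simp add: lev_def)
lemma lev_trans: "lev u v \<Longrightarrow> lev v w \<Longrightarrow> lev u w" unfolding lev_def using order_trans by blast
lemma lev_add: "lev v w \<Longrightarrow> lev v' w' \<Longrightarrow> lev (v + v') (w + w')"
  by (simp add: lev_def lookup_add add_mono)
lemma lev_addR: "lev v (v + w)" by (simp add: lev_def lookup_add)
lemma lev_addL: "lev v (w + v)" by (simp add: lev_def lookup_add)
lemma lev_diff: "lev v w \<Longrightarrow> w = v + (w - v)"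
  by (rule poly_mapping_eqI) (simp add: lev_def lookup_add lookup_minus)

lemma NN_add: "v \<in> NN n \<Longrightarrow> w \<in> NN n \<Longrightarrow> v + w \<in> NN n"
  by (simp add: NN_def keys_add_nat)
lemma NN_minus: "w \<in> NN n \<Longrightarrow> w - v \<in> NN n"
  unfolding NN_def
proof safe
  fix x assume "Poly_Mapping.keys w \<subseteq> {..<n}" "x \<in> Poly_Mapping.keys (w - v)"
  then have "Poly_Mapping.lookup w x \<noteq> 0" by (auto simp: in_keys_iff lookup_minus)
  then have "x \<in> Poly_Mapping.keys w" by (simp add: in_keys_iff)
  then show "x < n" using \<open>Poly_Mapping.keys w \<subseteq> {..<n}\<close> by blast
qed
lemma NN_le: "w \<in> NN n \<Longrightarrow> lev v w \<Longrightarrow> v \<in> NN n"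
  unfolding NN_def
proof safe
  fix x assume "Poly_Mapping.keys w \<subseteq> {..<n}" "x \<in> Poly_Mapping.keys v" "lev v w"
  then have "Poly_Mapping.lookup w x \<noteq> 0" unfolding lev_def in_keys_iff by (metis le_zero_eq)
  then have "x \<in> Poly_Mapping.keys w" by (simp add: in_keys_iff)
  then show "x < n" using \<open>Poly_Mapping.keys w \<subseteq> {..<n}\<close> by blast
qed

lemma Sring_MI: "Sring n = MI (NN n)"
  by (auto simp: Sring_def MI_def NN_def)

lemma monom_mult: "monom u * monom v = (monom (u + v) :: 'k::field mpoly)"
  by (simp add: monom_def mult_single)

lemma keys_monom[simp]: "Poly_Mapping.keys (monom u :: 'k::field mpoly) = {u}"
  by (simp add: monom_def)

lemma MI_mono: "U \<subseteq> V \<Longrightarrow> MI U \<subseteq> MI V" by (auto simp: MI_def)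

lemma monom_in_MI[simp]: "(monom u :: 'k::field mpoly) \<in> MI U \<longleftrightarrow> u \<in> U"
  by (simp add: MI_def)

lemma Sring_mult: assumes "p \<in> Sring n" "q \<in> Sring n" shows "p * q \<in> Sring n"
proof -
  have "Poly_Mapping.keys (p*q) \<subseteq> NN n"
    using keys_mult[of p q] assms by (auto simp: Sring_MI MI_def intro!: NN_add)
  thus ?thesis by (simp add: Sring_MI MI_def)
qed

lemma Sring_add: assumes "p \<in> Sring n" "q \<in> Sring n" shows "p + q \<in> Sring n"
  using assms keys_add[of p q] by (auto simp: Sring_MI MI_def)

lemma one_Sring: "1 \<in> Sring n" by (simp add: Sring_def)

lemma single0_Sring: "Poly_Mapping.single 0 c \<in> Sring n" by (simp add: Sring_def)

lemma ig_0: "0 \<in> ideal_gen n G"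
  unfolding ideal_gen_def by (rule CollectI, rule exI[of _ "{}"]) auto

lemma ig_base: "g \<in> G \<Longrightarrow> g \<in> ideal_gen n G"
  unfolding ideal_gen_def
  by (rule CollectI, rule exI[of _ "{g}"], rule exI[of _ "\<lambda>_. 1"]) (auto simp: one_Sring)

lemma ig_add: assumes "p \<in> ideal_gen n G" "q \<in> ideal_gen n G" shows "p + q \<in> ideal_gen n G"
proof -
  obtain F1 c1 where 1: "p = (\<Sum>g\<in>F1. c1 g * g)" "finite F1" "F1 \<subseteq> G" "\<forall>g\<in>F1. c1 g \<in> Sring n"
    using assms(1) unfolding ideal_gen_def by blast
  obtain F2 c2 where 2: "q = (\<Sum>g\<in>F2. c2 g * g)" "finite F2" "F2 \<subseteq> G" "\<forall>g\<in>F2. c2 g \<in> Sring n"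
    using assms(2) unfolding ideal_gen_def by blast
  define c where "c g = (if g \<in> F1 then c1 g else 0) + (if g \<in> F2 then c2 g else 0)" for g
  have a: "(\<Sum>g\<in>F1 \<union> F2. (if g \<in> F1 then c1 g else 0) * g) = p"
    unfolding 1 by (rule sum.mono_neutral_cong_right) (use 1 2 in auto)
  have b: "(\<Sum>g\<in>F1 \<union> F2. (if g \<in> F2 then c2 g else 0) * g) = q"
    unfolding 2 by (rule sum.mono_neutral_cong_right) (use 1 2 in auto)
  have "p + q = (\<Sum>g\<in>F1 \<union> F2. c g * g)"
    unfolding c_def distrib_right sum.distrib a b ..
  moreover have "\<forall>g\<in>F1 \<union> F2. c g \<in> Sring n"
    using 1 2 by (auto simp: c_def intro!: Sring_add)
  ultimately show ?thesis unfolding ideal_gen_def using 1 2 by blast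
qed

lemma ig_smult: assumes "c \<in> Sring n" "p \<in> ideal_gen n G" shows "c * p \<in> ideal_gen n G"
proof -
  obtain F1 c1 where 1: "p = (\<Sum>g\<in>F1. c1 g * g)" "finite F1" "F1 \<subseteq> G" "\<forall>g\<in>F1. c1 g \<in> Sring n"
    using assms(2) unfolding ideal_gen_def by blast
  have "c * p = (\<Sum>g\<in>F1. (c * c1 g) * g)" unfolding 1 by (simp add: sum_distrib_left mult.assoc)
  moreover have "\<forall>g\<in>F1. c * c1 g \<in> Sring n" using 1 assms(1) by (auto intro: Sring_mult)
  ultimately show ?thesis unfolding ideal_gen_def using 1(2,3)
    by (intro CollectI exI[of _ F1] exI[of _ "\<lambda>g. c * c1 g"]) auto
qed

lemma ig_sum: "finite A \<Longrightarrow> (\<And>a. a \<in> A \<Longrightarrow> f a \<in> ideal_gen n G) \<Longrightarrow> sum f A \<in> ideal_gen n G"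
  by (induction A rule: finite_induct) (auto intro: ig_0 ig_add)

lemma poly_expand: "p = (\<Sum>v\<in>Poly_Mapping.keys p. Poly_Mapping.single v (Poly_Mapping.lookup p v))"
proof (rule poly_mapping_eqI)
  fix k
  show "Poly_Mapping.lookup p k = Poly_Mapping.lookup (\<Sum>v\<in>Poly_Mapping.keys p. Poly_Mapping.single v (Poly_Mapping.lookup p v)) k"
    by (cases "k \<in> Poly_Mapping.keys p") (auto simp: lookup_sum lookup_single when_def in_keys_iff)
qed

lemma single_monom: "Poly_Mapping.single v c = Poly_Mapping.single 0 c * (monom v :: 'k::field mpoly)"
  by (simp add: monom_def mult_single)

lemma ideal_gen_eq_MI:
  fixes G :: "'k::field mpoly set"
  assumes "upc n U" "G \<subseteq> MI U" "\<And>v. v \<in> U \<Longrightarrow> monom v \<in> ideal_gen n G"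
  shows "ideal_gen n G = MI U"
proof
  show "ideal_gen n G \<subseteq> MI U"
  proof
    fix p assume "p \<in> ideal_gen n G"
    then obtain F c where 1: "p = (\<Sum>g\<in>F. c g * g)" "finite F" "F \<subseteq> G" "\<forall>g\<in>F. c g \<in> Sring n"
      unfolding ideal_gen_def by blast
    have "Poly_Mapping.keys (c g * g) \<subseteq> U" if "g \<in> F" for g
    proof
      fix x assume "x \<in> Poly_Mapping.keys (c g * g)"
      then obtain a b where ab: "x = a + b" "a \<in> Poly_Mapping.keys (c g)" "b \<in> Poly_Mapping.keys g"
        using keys_mult by blast
      have bU: "b \<in> U" using ab(3) that 1(3) assms(2) unfolding MI_def by blast
      have aN: "a \<in> NN n" using ab(2) that 1(4) unfolding Sring_MI MI_def by blast
      have bN: "b \<in> NN n" using bU assms(1) unfolding upc_def by blast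
      have "a + b \<in> NN n" using aN bN by (rule NN_add)
      moreover have "lev b (a + b)" by (rule lev_addL)
      ultimately show "x \<in> U" using assms(1) bU unfolding upc_def ab(1) by blast
    qed
    then have "Poly_Mapping.keys p \<subseteq> U" unfolding 1 using keys_sum[of "\<lambda>g. c g * g" F] by blast
    then show "p \<in> MI U" unfolding MI_def by blast
  qed
next
  show "MI U \<subseteq> ideal_gen n G"
  proof
    fix p :: "'k mpoly" assume p: "p \<in> MI U"
    have "p = (\<Sum>v\<in>Poly_Mapping.keys p. Poly_Mapping.single v (Poly_Mapping.lookup p v))"
      by (rule poly_expand)
    also have "\<dots> \<in> ideal_gen n G"
    proof (rule ig_sum)
      fix v assume v: "v \<in> Poly_Mapping.keys p"
      have "monom v \<in> ideal_gen n G" using v p assms(3) unfolding MI_def by blast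
      then have "Poly_Mapping.single 0 (Poly_Mapping.lookup p v) * monom v \<in> ideal_gen n G"
        by (rule ig_smult[OF single0_Sring])
      then show "Poly_Mapping.single v (Poly_Mapping.lookup p v) \<in> ideal_gen n G"
        by (simp add: single_monom[symmetric])
    qed simp
    finally show "p \<in> ideal_gen n G" .
  qed
qed

lemma upc_Up: "upc n (Up n E)"
  unfolding upc_def Up_def using lev_trans by blast

lemma upc_NN: "upc n (NN n)" unfolding upc_def by blast

lemma MI_family:
  fixes G :: "'k::field mpoly set"
  assumes "upc n W" "G \<subseteq> MI W" "\<And>v. v \<in> W \<Longrightarrow> monom v \<in> G"
  shows "ideal_gen n G = MI W"
  using ideal_gen_eq_MI[OF assms(1,2)] assms(3) ig_base by blast

lemma monom_Sring: "v \<in> NN n \<Longrightarrow> (monom v :: 'k::field mpoly) \<in> Sring n"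
  unfolding Sring_MI by simp

lemma ideal_gen_monom:
  assumes "E \<subseteq> NN n"
  shows "ideal_gen n ((monom :: _ \<Rightarrow> 'k::field mpoly) ` E) = MI (Up n E)"
proof (rule ideal_gen_eq_MI[OF upc_Up])
  show "(monom :: _ \<Rightarrow> 'k::field mpoly) ` E \<subseteq> MI (Up n E)"
  proof
    fix x assume "x \<in> (monom :: _ \<Rightarrow> 'k::field mpoly) ` E"
    then obtain e where e: "x = monom e" "e \<in> E" by blast
    then have "e \<in> Up n E" using assms unfolding Up_def by (blast intro: lev_refl)
    then show "x \<in> MI (Up n E)" using e by simp
  qed
next
  fix v assume "v \<in> Up n E"
  then obtain e where e: "e \<in> E" "lev e v" "v \<in> NN n" unfolding Up_def by blast
  have "v = (v - e) + e" using lev_diff[OF e(2)] by (simp add: add.commute)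
  then have "(monom v :: 'k mpoly) = monom (v - e) * monom e" by (metis monom_mult)
  moreover have "(monom (v - e) :: 'k mpoly) \<in> Sring n" by (rule monom_Sring[OF NN_minus[OF e(3)]])
  moreover have "(monom e :: 'k mpoly) \<in> ideal_gen n (monom ` E)" using e(1) by (intro ig_base) blast
  ultimately show "(monom v :: 'k mpoly) \<in> ideal_gen n (monom ` E)" by (metis ig_smult)
qed

lemma upc_msum: assumes "upc n U" "upc n V" shows "upc n (msum U V)"
  unfolding upc_def
proof safe
  fix x assume "x \<in> msum U V"
  then show "x \<in> NN n" using assms unfolding msum_def upc_def by (auto intro: NN_add)
next
  fix x w assume x: "x \<in> msum U V" and w: "w \<in> NN n" "lev x w"
  then obtain u v where uv: "x = u + v" "u \<in> U" "v \<in> V" unfolding msum_def by blast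
  have "w = x + (w - x)" by (rule lev_diff[OF w(2)])
  then have "w = (u + (w - x)) + v" using uv(1) by (simp add: ac_simps)
  moreover have "u + (w - x) \<in> U"
  proof -
    have "u \<in> NN n" using uv(2) assms(1) unfolding upc_def by blast
    then have "u + (w - x) \<in> NN n" using NN_add NN_minus w(1) by blast
    moreover have "lev u (u + (w - x))" by (rule lev_addR)
    ultimately show ?thesis using assms(1) uv(2) unfolding upc_def by blast
  qed
  ultimately show "w \<in> msum U V" using uv(3) unfolding msum_def by blast
qed

lemma MI_mult:
  assumes "upc n U" "upc n V"
  shows "ideal_mult n (MI U) (MI V) = (MI (msum U V) :: 'k::field mpoly set)"
  unfolding ideal_mult_def
proof (rule MI_family[OF upc_msum[OF assms]])
  show "{a * b |a b. a \<in> (MI U :: 'k mpoly set) \<and> b \<in> MI V} \<subseteq> MI (msum U V)"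
  proof safe
    fix a b :: "'k mpoly" assume ab: "a \<in> MI U" "b \<in> MI V"
    have "Poly_Mapping.keys (a * b) \<subseteq> msum U V"
      using keys_mult[of a b] ab unfolding MI_def msum_def by blast
    then show "a * b \<in> MI (msum U V)" unfolding MI_def by blast
  qed
next
  fix x assume "x \<in> msum U V"
  then obtain u v where uv: "x = u + v" "u \<in> U" "v \<in> V" unfolding msum_def by blast
  have "(monom x :: 'k mpoly) = monom u * monom v" using uv(1) monom_mult by metis
  then show "(monom x :: 'k mpoly) \<in> {a * b |a b. a \<in> MI U \<and> b \<in> MI V}" using uv
    by (intro CollectI exI[of _ "monom u"] exI[of _ "monom v"]) simp
qed

lemma MI_Union:
  assumes "\<And>k. k \<in> K \<Longrightarrow> upc n (V k)"
  shows "ideal_gen n (\<Union>k\<in>K. (MI (V k) :: 'k::field mpoly set)) = MI (\<Union>k\<in>K. V k)"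
proof (rule MI_family)
  show "upc n (\<Union>k\<in>K. V k)" using assms unfolding upc_def by blast
  show "(\<Union>k\<in>K. (MI (V k) :: 'k mpoly set)) \<subseteq> MI (\<Union>k\<in>K. V k)" unfolding MI_def by blast
  fix v assume "v \<in> (\<Union>k\<in>K. V k)"
  then show "(monom v :: 'k mpoly) \<in> (\<Union>k\<in>K. MI (V k))" by simp
qed

lemma MI_Union2:
  assumes "upc n X" "\<And>k. k \<in> K \<Longrightarrow> upc n (V k)"
  shows "ideal_gen n (MI X \<union> (\<Union>k\<in>K. (MI (V k) :: 'k::field mpoly set))) = MI (X \<union> (\<Union>k\<in>K. V k))"
proof (rule MI_family)
  show "upc n (X \<union> (\<Union>k\<in>K. V k))" using assms unfolding upc_def by blast
  show "MI X \<union> (\<Union>k\<in>K. (MI (V k) :: 'k mpoly set)) \<subseteq> MI (X \<union> (\<Union>k\<in>K. V k))" unfolding MI_def by blast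
  fix v assume "v \<in> X \<union> (\<Union>k\<in>K. V k)"
  then show "(monom v :: 'k mpoly) \<in> MI X \<union> (\<Union>k\<in>K. MI (V k))" by auto
qed

lemma mult_monom_expand:
  "p * (monom e :: 'k::field mpoly) = (\<Sum>w\<in>Poly_Mapping.keys p. Poly_Mapping.single (w + e) (Poly_Mapping.lookup p w))"
proof -
  have "p * monom e = (\<Sum>w\<in>Poly_Mapping.keys p. Poly_Mapping.single w (Poly_Mapping.lookup p w)) * monom e"
    using poly_expand[of p] by simp
  also have "\<dots> = (\<Sum>w\<in>Poly_Mapping.keys p. Poly_Mapping.single w (Poly_Mapping.lookup p w) * monom e)"
    by (rule sum_distrib_right)
  also have "\<dots> = (\<Sum>w\<in>Poly_Mapping.keys p. Poly_Mapping.single (w + e) (Poly_Mapping.lookup p w))"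
    by (simp add: monom_def mult_single)
  finally show ?thesis .
qed

lemma lookup_mult_monom:
  "Poly_Mapping.lookup (p * (monom e :: 'k::field mpoly)) (v + e) = Poly_Mapping.lookup p v"
proof -
  have "Poly_Mapping.lookup (p * monom e) (v + e) =
     (\<Sum>w\<in>Poly_Mapping.keys p. (if w = v then Poly_Mapping.lookup p w else 0))"
    unfolding mult_monom_expand lookup_sum lookup_single
    by (rule sum.cong) (auto simp: when_def)
  also have "\<dots> = Poly_Mapping.lookup p v"
    by (cases "v \<in> Poly_Mapping.keys p") (simp_all add: sum.delta in_keys_iff)
  finally show ?thesis .
qed

definition ev :: "nat \<Rightarrow> nat \<Rightarrow>\<^sub>0 nat" where "ev i = Poly_Mapping.single i 1"

definition Cn :: "nat \<Rightarrow> (nat \<Rightarrow>\<^sub>0 nat) set \<Rightarrow> (nat \<Rightarrow>\<^sub>0 nat) set" where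
  "Cn n U = {v \<in> NN n. \<forall>i<n. ev i + v \<in> U}"

lemma ev_NN: "i < n \<Longrightarrow> ev i \<in> NN n" by (simp add: ev_def NN_def)

lemma upc_Cn: assumes "upc n U" shows "upc n (Cn n U)"
  unfolding upc_def
proof safe
  fix x assume "x \<in> Cn n U" then show "x \<in> NN n" unfolding Cn_def by blast
next
  fix v w assume v: "v \<in> Cn n U" and w: "w \<in> NN n" "lev v w"
  have "ev i + w \<in> U" if "i < n" for i
  proof -
    have "ev i + v \<in> U" using v that unfolding Cn_def by blast
    moreover have "ev i + w \<in> NN n" using NN_add[OF ev_NN[OF that] w(1)] .
    moreover have "lev (ev i + v) (ev i + w)" using lev_add[OF lev_refl w(2)] .
    ultimately show ?thesis using assms unfolding upc_def by blast
  qed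
  then show "w \<in> Cn n U" using w unfolding Cn_def by blast
qed

lemma var_ev: "var i = monom (ev i)" by (simp add: var_def ev_def)

lemma max_ideal_MI: "max_ideal n = (MI (Up n {ev i | i. i < n}) :: 'k::field mpoly set)"
proof -
  have 1: "{var i | i. i < n} = (monom :: _ \<Rightarrow> 'k mpoly) ` {ev i | i. i < n}" unfolding var_ev by blast
  have 2: "{ev i | i. i < n} \<subseteq> NN n" using ev_NN by blast
  show ?thesis unfolding max_ideal_def 1 by (rule ideal_gen_monom[OF 2])
qed

lemma colon_MI:
  assumes "upc n U"
  shows "ideal_colon n (MI U) (max_ideal n) = (MI (Cn n U) :: 'k::field mpoly set)"
proof
  show "ideal_colon n (MI U) (max_ideal n) \<subseteq> (MI (Cn n U) :: 'k mpoly set)"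
  proof
    fix p :: "'k mpoly" assume p: "p \<in> ideal_colon n (MI U) (max_ideal n)"
    have pS: "p \<in> Sring n" using p unfolding ideal_colon_def by blast
    have "v \<in> Cn n U" if v: "v \<in> Poly_Mapping.keys p" for v
    proof -
      have vN: "v \<in> NN n" using pS v unfolding Sring_MI MI_def by blast
      have "ev i + v \<in> U" if i: "i < n" for i
      proof -
        have "(monom (ev i) :: 'k mpoly) \<in> max_ideal n"
          unfolding max_ideal_def var_ev[symmetric] using i by (intro ig_base) blast
        then have "p * monom (ev i) \<in> MI U" using p unfolding ideal_colon_def by blast
        moreover have "v + ev i \<in> Poly_Mapping.keys (p * monom (ev i))"
          using v by (simp add: in_keys_iff lookup_mult_monom)
        ultimately show ?thesis unfolding MI_def by (auto simp: add.commute)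
      qed
      then show ?thesis using vN unfolding Cn_def by blast
    qed
    then show "p \<in> MI (Cn n U)" unfolding MI_def by blast
  qed
next
  show "(MI (Cn n U) :: 'k mpoly set) \<subseteq> ideal_colon n (MI U) (max_ideal n)"
  proof
    fix p :: "'k mpoly" assume p: "p \<in> MI (Cn n U)"
    have pS: "p \<in> Sring n" using p upc_Cn[OF assms] unfolding Sring_MI MI_def upc_def by blast
    have "p * q \<in> MI U" if q: "q \<in> max_ideal n" for q
    proof -
      have "x \<in> U" if x: "x \<in> Poly_Mapping.keys (p * q)" for x
      proof -
        obtain a c where ac: "x = a + c" "a \<in> Poly_Mapping.keys p" "c \<in> Poly_Mapping.keys q"
          using keys_mult x by blast
        have aC: "a \<in> Cn n U" using ac(2) p unfolding MI_def by blast
        have "c \<in> Up n {ev i | i. i < n}" using ac(3) q unfolding max_ideal_MI MI_def by blast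
        then obtain i where i: "i < n" "lev (ev i) c" "c \<in> NN n" unfolding Up_def by blast
        have "ev i + a \<in> U" using aC i(1) unfolding Cn_def by blast
        moreover have "lev (ev i + a) x" unfolding ac(1) using lev_add[OF i(2) lev_refl, of a]
          by (simp add: add.commute)
        moreover have "x \<in> NN n" using aC i(3) ac(1) unfolding Cn_def by (auto intro: NN_add)
        ultimately show ?thesis using assms unfolding upc_def by blast
      qed
      then show ?thesis unfolding MI_def by blast
    qed
    then show "p \<in> ideal_colon n (MI U) (max_ideal n)" using pS unfolding ideal_colon_def by blast
  qed
qed

primrec fwdA :: "(nat \<Rightarrow> int) \<Rightarrow> (nat \<Rightarrow> int) \<Rightarrow> nat \<Rightarrow> int" where
  "fwdA L lo 0 = L 0"
| "fwdA L lo (Suc p) = max (L (Suc p)) (fwdA L lo p + lo (Suc p))"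

primrec bwdB :: "(nat \<Rightarrow> int) \<Rightarrow> (nat \<Rightarrow> int) \<Rightarrow> nat \<Rightarrow> int" where
  "bwdB U hi 0 = U 0"
| "bwdB U hi (Suc p) = min (U (Suc p)) (bwdB U hi p + hi (Suc p))"

lemma ivl_Suc: "a \<le> p \<Longrightarrow> {a<..Suc p} = insert (Suc p) {a<..p}" by auto

lemma sum_ivl_Suc: "a \<le> p \<Longrightarrow> sum f {a<..Suc p} = sum f {a<..p} + (f (Suc p) :: 'a::comm_monoid_add)"
  by (simp add: ivl_Suc add.commute)

lemma sum_ivl_split: "(a::nat) \<le> c \<Longrightarrow> c \<le> p \<Longrightarrow> sum f {a<..p} = sum f {a<..c} + (sum f {c<..p} :: 'a::comm_monoid_add)"
proof -
  assume "a \<le> c" "c \<le> p"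
  then have "{a<..p} = {a<..c} \<union> {c<..p}" by auto
  moreover have "{a<..c} \<inter> {c<..p} = {}" by auto
  ultimately show ?thesis by (simp add: sum.union_disjoint)
qed

lemma fwdA_repr: "\<exists>a\<le>p. fwdA L lo p = L a + sum lo {a<..p}"
proof (induction p)
  case 0 then show ?case by simp
next
  case (Suc p)
  then obtain a where a: "a \<le> p" "fwdA L lo p = L a + sum lo {a<..p}" by blast
  show ?case
  proof (cases "L (Suc p) \<ge> fwdA L lo p + lo (Suc p)")
    case True then show ?thesis by (intro exI[of _ "Suc p"]) simp
  next
    case False
    then have "fwdA L lo (Suc p) = L a + sum lo {a<..Suc p}" using a by (simp add: sum_ivl_Suc)
    then show ?thesis using a(1) by (intro exI[of _ a]) simp
  qed
qed

lemma bwdB_repr: "\<exists>a\<le>p. bwdB U hi p = U a + sum hi {a<..p}"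
proof (induction p)
  case 0 then show ?case by simp
next
  case (Suc p)
  then obtain a where a: "a \<le> p" "bwdB U hi p = U a + sum hi {a<..p}" by blast
  show ?case
  proof (cases "U (Suc p) \<le> bwdB U hi p + hi (Suc p)")
    case True then show ?thesis by (intro exI[of _ "Suc p"]) simp
  next
    case False
    then have "bwdB U hi (Suc p) = U a + sum hi {a<..Suc p}" using a by (simp add: sum_ivl_Suc)
    then show ?thesis using a(1) by (intro exI[of _ a]) simp
  qed
qed

lemma chain_feasible:
  fixes L U lo hi :: "nat \<Rightarrow> int" and N :: nat
  assumes LU: "\<And>p. p \<le> N \<Longrightarrow> L p \<le> U p"
    and lohi: "\<And>p. 1 \<le> p \<Longrightarrow> p \<le> N \<Longrightarrow> lo p \<le> hi p"
    and c1: "\<And>a b. a < b \<Longrightarrow> b \<le> N \<Longrightarrow> L a + sum lo {a<..b} \<le> U b"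
    and c2: "\<And>a b. a < b \<Longrightarrow> b \<le> N \<Longrightarrow> L b \<le> U a + sum hi {a<..b}"
  shows "\<exists>T. (\<forall>p\<le>N. L p \<le> T p \<and> T p \<le> U p) \<and>
             (\<forall>p. 1 \<le> p \<and> p \<le> N \<longrightarrow> lo p \<le> T p - T (p - 1) \<and> T p - T (p - 1) \<le> hi p)"
proof -
  have AB: "fwdA L lo p \<le> bwdB U hi p" if "p \<le> N" for p
  proof -
    obtain a where a: "a \<le> p" "fwdA L lo p = L a + sum lo {a<..p}" using fwdA_repr by blast
    obtain a' where a': "a' \<le> p" "bwdB U hi p = U a' + sum hi {a'<..p}" using bwdB_repr by blast
    have mono: "sum lo {c<..p} \<le> sum hi {c<..p}" for c
      by (rule sum_mono) (use lohi that in auto)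
    show ?thesis
    proof (cases "a \<le> a'")
      case True
      have "L a + sum lo {a<..a'} \<le> U a'"
        using True c1[of a a'] LU[of a] a'(1) that by (cases "a = a'") auto
      then show ?thesis using a a' sum_ivl_split[OF True a'(1), of lo] mono[of a'] by linarith
    next
      case False
      then have "a' \<le> a" by simp
      have "L a \<le> U a' + sum hi {a'<..a}" using False c2[of a' a] a(1) that by auto
      then show ?thesis using a a' sum_ivl_split[OF \<open>a' \<le> a\<close> a(1), of hi] mono[of a] by linarith
    qed
  qed
  have path: "\<forall>x. fwdA L lo p \<le> x \<and> x \<le> bwdB U hi p \<longrightarrow> (\<exists>T. T p = x \<and> (\<forall>q\<le>p. L q \<le> T q \<and> T q \<le> U q) \<and>
             (\<forall>q. 1 \<le> q \<and> q \<le> p \<longrightarrow> lo q \<le> T q - T (q - 1) \<and> T q - T (q - 1) \<le> hi q))"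
    if "p \<le> N" for p
    using that
  proof (induction p)
    case 0
    show ?case
    proof (intro allI impI)
      fix x assume "fwdA L lo 0 \<le> x \<and> x \<le> bwdB U hi 0"
      then show "\<exists>T. T 0 = x \<and> (\<forall>q\<le>0. L q \<le> T q \<and> T q \<le> U q) \<and>
             (\<forall>q. 1 \<le> q \<and> q \<le> 0 \<longrightarrow> lo q \<le> T q - T (q - 1) \<and> T q - T (q - 1) \<le> hi q)"
        by (intro exI[of _ "\<lambda>_. x"]) auto
    qed
  next
    case (Suc p)
    show ?case
    proof (intro allI impI)
      fix x assume x: "fwdA L lo (Suc p) \<le> x \<and> x \<le> bwdB U hi (Suc p)"
      define y where "y = max (fwdA L lo p) (x - hi (Suc p))"
      have pN: "p \<le> N" using Suc.prems by simp
      have "y \<le> bwdB U hi p" using AB[OF pN] x by (auto simp: y_def)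
      moreover have "fwdA L lo p \<le> y" by (simp add: y_def)
      ultimately obtain T where T: "T p = y" "\<forall>q\<le>p. L q \<le> T q \<and> T q \<le> U q"
             "\<forall>q. 1 \<le> q \<and> q \<le> p \<longrightarrow> lo q \<le> T q - T (q - 1) \<and> T q - T (q - 1) \<le> hi q"
        using Suc.IH[OF pN] by blast
      have lh: "lo (Suc p) \<le> hi (Suc p)" using lohi[of "Suc p"] Suc.prems by simp
      define T' where "T' = T(Suc p := x)"
      have "T' (Suc p) = x" by (simp add: T'_def)
      moreover have "\<forall>q\<le>Suc p. L q \<le> T' q \<and> T' q \<le> U q"
      proof (intro allI impI)
        fix q assume "q \<le> Suc p"
        then consider "q \<le> p" | "q = Suc p" by linarith
        then show "L q \<le> T' q \<and> T' q \<le> U q"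
        proof cases
          case 1 then show ?thesis using T(2) by (simp add: T'_def)
        next
          case 2 then show ?thesis using x by (auto simp: T'_def)
        qed
      qed
      moreover have "\<forall>q. 1 \<le> q \<and> q \<le> Suc p \<longrightarrow> lo q \<le> T' q - T' (q - 1) \<and> T' q - T' (q - 1) \<le> hi q"
      proof (intro allI impI)
        fix q assume q: "1 \<le> q \<and> q \<le> Suc p"
        then consider "q \<le> p" | "q = Suc p" by linarith
        then show "lo q \<le> T' q - T' (q - 1) \<and> T' q - T' (q - 1) \<le> hi q"
        proof cases
          case 1
          then have "q - 1 \<noteq> Suc p" "q \<noteq> Suc p" by auto
          then show ?thesis using T(3) q 1 by (simp add: T'_def)
        next
          case 2 then show ?thesis using x T(1) lh by (auto simp: T'_def y_def)
        qed
      qed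
      ultimately show "\<exists>T. T (Suc p) = x \<and> (\<forall>q\<le>Suc p. L q \<le> T q \<and> T q \<le> U q) \<and>
             (\<forall>q. 1 \<le> q \<and> q \<le> Suc p \<longrightarrow> lo q \<le> T q - T (q - 1) \<and> T q - T (q - 1) \<le> hi q)" by blast
    qed
  qed
  show ?thesis using path[of N] AB[of N] by blast
qed

definition ps :: "(nat \<Rightarrow>\<^sub>0 nat) \<Rightarrow> nat \<Rightarrow> nat" where "ps v p = (\<Sum>j<p. Poly_Mapping.lookup v j)"

lemma ps_0[simp]: "ps v 0 = 0" by (simp add: ps_def)
lemma ps_Suc: "ps v (Suc p) = ps v p + Poly_Mapping.lookup v p" by (simp add: ps_def)
lemma ps_add: "ps (u + v) p = ps u p + ps v p" by (simp add: ps_def lookup_add sum.distrib)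
lemma ps_evv: "ps (ev i) p = (if i < p then 1 else 0)"
  by (induction p) (auto simp: ps_Suc ev_def lookup_single when_def)
lemma ps_ev: "ps (ev i + u) p = ps u p + (if i < p then 1 else 0)"
  by (simp add: ps_add ps_evv)
lemma lev_ps: "lev u v \<Longrightarrow> ps u p \<le> ps v p"
  unfolding ps_def lev_def by (rule sum_mono) blast
lemma ps_mono: "p \<le> q \<Longrightarrow> ps u p \<le> ps u q"
  unfolding ps_def by (rule sum_mono2) auto

lemma ps_ivl: "a \<le> c \<Longrightarrow> int (ps u c) - int (ps u a) = (\<Sum>p\<in>{a<..c}. int (Poly_Mapping.lookup u (p - 1)))"
proof (induction c)
  case 0 then show ?case by simp
next
  case (Suc c)
  show ?case
  proof (cases "a = Suc c")
    case True then show ?thesis by simp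
  next
    case False
    then have "a \<le> c" using Suc.prems by simp
    then show ?thesis using Suc.IH by (simp add: sum_ivl_Suc ps_Suc)
  qed
qed

lemma mdeg_ps: "u \<in> NN n \<Longrightarrow> mdeg u = ps u n"
  unfolding mdeg_def ps_def NN_def
  by (rule sum.mono_neutral_left) (auto simp: in_keys_iff)

lemma lev_eq:
  assumes "lev g w" "w \<in> NN n" "ps g n = ps w n"
  shows "g = w"
proof (rule poly_mapping_eqI)
  fix k
  have gN: "g \<in> NN n" using NN_le assms by blast
  show "Poly_Mapping.lookup g k = Poly_Mapping.lookup w k"
  proof (cases "k < n")
    case True
    show ?thesis
      using sum_mono_inv[of "\<lambda>j. Poly_Mapping.lookup g j" "{..<n}" "\<lambda>j. Poly_Mapping.lookup w j" k]
        assms True unfolding ps_def lev_def by auto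
  next
    case False
    then have "k \<notin> Poly_Mapping.keys g" "k \<notin> Poly_Mapping.keys w" using gN assms(2) unfolding NN_def by auto
    then show ?thesis by (simp add: in_keys_iff)
  qed
qed

definition mkv :: "nat \<Rightarrow> (nat \<Rightarrow> nat) \<Rightarrow> nat \<Rightarrow>\<^sub>0 nat" where
  "mkv n f = Abs_poly_mapping (\<lambda>j. if j < n then f j else 0)"

lemma lookup_mkv: "Poly_Mapping.lookup (mkv n f) j = (if j < n then f j else 0)"
proof -
  have "finite {j. (if j < n then f j else 0) \<noteq> 0}"
    by (rule finite_subset[of _ "{..<n}"]) auto
  then show ?thesis unfolding mkv_def by simp
qed

lemma mkv_NN: "mkv n f \<in> NN n"
  unfolding NN_def by (auto simp: in_keys_iff lookup_mkv split: if_splits)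

lemma scale_low: "(k::int) \<ge> 0 \<Longrightarrow> X \<le> (k+1)*Y \<Longrightarrow> (k+1)*(X - k*Y) \<le> X"
proof -
  assume "k \<ge> 0" "X \<le> (k+1)*Y"
  then have "k*(X - (k+1)*Y) \<le> 0" by (simp add: mult_nonneg_nonpos)
  moreover have "(k+1)*(X - k*Y) = X + k*(X - (k+1)*Y)" by (simp add: algebra_simps)
  ultimately show ?thesis by linarith
qed

lemma scale_up: "(k::int) \<ge> 0 \<Longrightarrow> (k+1)*Y \<le> X \<Longrightarrow> X \<le> (k+1)*(X - k*Y)"
proof -
  assume "k \<ge> 0" "(k+1)*Y \<le> X"
  then have "k*(X - (k+1)*Y) \<ge> 0" by simp
  moreover have "(k+1)*(X - k*Y) = X + k*(X - (k+1)*Y)" by (simp add: algebra_simps)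
  ultimately show ?thesis by linarith
qed

lemma cancel_slack: "(M::int) > 0 \<Longrightarrow> M * x \<le> M * y + (M - 1) \<Longrightarrow> x \<le> y"
proof (rule ccontr)
  assume "M > 0" "M * x \<le> M * y + (M - 1)" "\<not> x \<le> y"
  then have "y + 1 \<le> x" by simp
  then have "M * (y + 1) \<le> M * x" using \<open>M > 0\<close> by simp
  then show False using \<open>M * x \<le> M * y + (M - 1)\<close> by (simp add: algebra_simps)
qed

locale plp =
  fixes n d :: nat and b \<alpha> \<beta> :: "nat \<Rightarrow> nat"
  assumes n1: "n \<ge> 1"
    and am: "\<And>i. i + 1 < n \<Longrightarrow> \<alpha> i \<le> \<alpha> (i + 1)"
    and bm: "\<And>i. i + 1 < n \<Longrightarrow> \<beta> i \<le> \<beta> (i + 1)"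
    and an: "\<alpha> (n - 1) = d" and bn: "\<beta> (n - 1) = d"
    and ab: "\<And>i. i < n \<Longrightarrow> \<alpha> i \<le> \<beta> i"
    and a0: "\<alpha> 0 = 0" and b0: "\<beta> 0 = b 0"
begin

definition Gm :: "nat \<Rightarrow> (nat \<Rightarrow>\<^sub>0 nat) set" where
  "Gm m = {u \<in> NN n. \<forall>i<n. Poly_Mapping.lookup u i \<le> m * b i \<and> m * \<alpha> i \<le> ps u (Suc i) \<and> ps u (Suc i) \<le> m * \<beta> i}"

lemma am': "i \<le> j \<Longrightarrow> j < n \<Longrightarrow> \<alpha> i \<le> \<alpha> j"
proof (induction j)
  case 0 then show ?case by simp
next
  case (Suc j)
  then show ?case using am[of j] by (cases "i = Suc j") auto
qed

lemma Gm_deg: "u \<in> Gm m \<Longrightarrow> ps u n = m * d"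
proof -
  assume u: "u \<in> Gm m"
  have i: "n - 1 < n" using n1 by simp
  have "m * \<alpha> (n-1) \<le> ps u (Suc (n-1)) \<and> ps u (Suc (n-1)) \<le> m * \<beta> (n-1)"
    using u i unfolding Gm_def by blast
  moreover have "Suc (n - 1) = n" using n1 by simp
  ultimately have "m * d \<le> ps u n \<and> ps u n \<le> m * d" using an bn by metis
  then show ?thesis by linarith
qed

lemma Gm_add: "u \<in> Gm a \<Longrightarrow> v \<in> Gm c \<Longrightarrow> u + v \<in> Gm (a + c)"
  unfolding Gm_def by (auto simp: lookup_add ps_add add_mono distrib_right intro: NN_add)

lemma Gm_NN: "Gm m \<subseteq> NN n" unfolding Gm_def by blast

end

context plp begin

lemma F1:
  assumes u: "u \<in> Gm (Suc m)"
  shows "\<exists>g w. g \<in> Gm 1 \<and> w \<in> Gm m \<and> u = w + g"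
proof -
  define S where "S p = int (ps u p)" for p
  define x where "x j = int (Poly_Mapping.lookup u j)" for j
  define M where "M = int m"
  have M0: "M \<ge> 0" "M + 1 > 0" by (auto simp: M_def)
  have uN: "u \<in> NN n" using u unfolding Gm_def by blast
  have ub: "x i \<le> (M+1) * int (b i)" if "i < n" for i
  proof -
    have "Poly_Mapping.lookup u i \<le> Suc m * b i" using u that unfolding Gm_def by blast
    then have "int (Poly_Mapping.lookup u i) \<le> int (Suc m * b i)" by (simp only: of_nat_le_iff)
    then show ?thesis by (simp add: x_def M_def algebra_simps)
  qed
  have ua: "(M+1) * int (\<alpha> i) \<le> S (Suc i)" if "i < n" for i
  proof -
    have "Suc m * \<alpha> i \<le> ps u (Suc i)" using u that unfolding Gm_def by blast
    then have "int (Suc m * \<alpha> i) \<le> int (ps u (Suc i))" by (simp only: of_nat_le_iff)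
    then show ?thesis by (simp add: S_def M_def algebra_simps)
  qed
  have ube: "S (Suc i) \<le> (M+1) * int (\<beta> i)" if "i < n" for i
  proof -
    have "ps u (Suc i) \<le> Suc m * \<beta> i" using u that unfolding Gm_def by blast
    then have "int (ps u (Suc i)) \<le> int (Suc m * \<beta> i)" by (simp only: of_nat_le_iff)
    then show ?thesis by (simp add: S_def M_def algebra_simps)
  qed
  define L where "L p = (if p = 0 then 0 else max (int (\<alpha> (p-1))) (S p - M * int (\<beta> (p-1))))" for p
  define U where "U p = (if p = 0 then 0 else min (int (\<beta> (p-1))) (S p - M * int (\<alpha> (p-1))))" for p
  define lo where "lo p = max 0 (x (p-1) - M * int (b (p-1)))" for p
  define hi where "hi p = min (int (b (p-1))) (x (p-1))" for p
  have S0: "S 0 = 0" by (simp add: S_def)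
  have Sd: "S c - S a = (\<Sum>p\<in>{a<..c}. x (p - 1))" if "a \<le> c" for a c
    unfolding S_def x_def using ps_ivl[OF that] .
  have bL: "(M+1) * L p \<le> S p" if pn: "p \<le> n" for p
  proof (cases "p = 0")
    case True then show ?thesis by (simp add: L_def S0)
  next
    case False
    then obtain i where i: "p = Suc i" "i < n" using pn by (cases p) auto
    have "(M+1) * int (\<alpha> i) \<le> S p" using ua[OF i(2)] i by simp
    moreover have "(M+1) * (S p - M * int (\<beta> i)) \<le> S p"
      using scale_low[OF M0(1) ube[OF i(2)]] i by simp
    ultimately show ?thesis using i by (simp add: L_def max_def)
  qed
  have bU: "S p \<le> (M+1) * U p" if pn: "p \<le> n" for p
  proof (cases "p = 0")
    case True then show ?thesis by (simp add: U_def S0)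
  next
    case False
    then obtain i where i: "p = Suc i" "i < n" using pn by (cases p) auto
    have "S p \<le> (M+1) * int (\<beta> i)" using ube[OF i(2)] i by simp
    moreover have "S p \<le> (M+1) * (S p - M * int (\<alpha> i))"
      using scale_up[OF M0(1) ua[OF i(2)]] i by simp
    ultimately show ?thesis using i by (simp add: U_def min_def)
  qed
  have blo: "(M+1) * lo p \<le> x (p-1)" if "1 \<le> p" "p \<le> n" for p
  proof -
    have "(M+1) * (x (p-1) - M * int (b (p-1))) \<le> x (p-1)"
      using scale_low[OF M0(1) ub[of "p-1"]] that by simp
    moreover have "0 \<le> x (p-1)" by (simp add: x_def)
    ultimately show ?thesis by (simp add: lo_def max_def)
  qed
  have bhi: "x (p-1) \<le> (M+1) * hi p" if "1 \<le> p" "p \<le> n" for p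
  proof -
    have "x (p-1) \<le> (M+1) * int (b (p-1))" using ub[of "p-1"] that by simp
    moreover have "x (p-1) \<le> (M+1) * x (p-1)" using M0 by (simp add: x_def algebra_simps)
    ultimately show ?thesis by (simp add: hi_def min_def)
  qed
  obtain T where T1: "\<forall>p\<le>n. L p \<le> T p \<and> T p \<le> U p"
    and T2: "\<forall>p. 1 \<le> p \<and> p \<le> n \<longrightarrow> lo p \<le> T p - T (p - 1) \<and> T p - T (p - 1) \<le> hi p"
  proof (atomize_elim, rule chain_feasible)
    fix p assume p: "p \<le> n"
    have "(M+1) * L p \<le> (M+1) * U p" using bL[OF p] bU[OF p] by linarith
    then show "L p \<le> U p" using M0 by simp
  next
    fix p assume p: "1 \<le> p" "p \<le> n"
    have "(M+1) * lo p \<le> (M+1) * hi p" using blo[OF p] bhi[OF p] by linarith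
    then show "lo p \<le> hi p" using M0 by simp
  next
    fix a c assume ac: "a < c" "c \<le> n"
    have "(M+1) * (L a + sum lo {a<..c}) = (M+1) * L a + (\<Sum>p\<in>{a<..c}. (M+1) * lo p)"
      by (simp add: algebra_simps sum_distrib_left)
    also have "\<dots> \<le> S a + (\<Sum>p\<in>{a<..c}. x (p-1))"
      using bL[of a] ac by (intro add_mono sum_mono blo) auto
    also have "\<dots> = S c" using Sd[of a c] ac by simp
    also have "\<dots> \<le> (M+1) * U c" using bU ac by simp
    finally show "L a + sum lo {a<..c} \<le> U c" using M0 by simp
  next
    fix a c assume ac: "a < c" "c \<le> n"
    have "(M+1) * L c \<le> S c" using bL ac by simp
    also have "\<dots> = S a + (\<Sum>p\<in>{a<..c}. x (p-1))" using Sd[of a c] ac by simp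
    also have "\<dots> \<le> (M+1) * U a + (\<Sum>p\<in>{a<..c}. (M+1) * hi p)"
      using bU[of a] ac by (intro add_mono sum_mono bhi) auto
    also have "\<dots> = (M+1) * (U a + sum hi {a<..c})"
      by (simp add: algebra_simps sum_distrib_left)
    finally show "L c \<le> U a + sum hi {a<..c}" using M0 by simp
  qed
  have T0: "T 0 = 0" using T1 by (auto simp: L_def U_def)
  have step: "lo (Suc j) \<le> T (Suc j) - T j \<and> T (Suc j) - T j \<le> hi (Suc j)" if "j < n" for j
    using T2[rule_format, of "Suc j"] that by simp
  define g where "g = mkv n (\<lambda>j. nat (T (Suc j) - T j))"
  have lg: "int (Poly_Mapping.lookup g j) = T (Suc j) - T j" if "j < n" for j
  proof -
    have "0 \<le> lo (Suc j)" by (simp add: lo_def)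
    then show ?thesis using step[OF that] that by (simp add: g_def lookup_mkv)
  qed
  have psg: "int (ps g p) = T p" if "p \<le> n" for p
    using that
  proof (induction p)
    case 0 then show ?case by (simp add: T0)
  next
    case (Suc p) then show ?case using lg[of p] by (simp add: ps_Suc)
  qed
  have gN: "g \<in> NN n" unfolding g_def by (rule mkv_NN)
  have glev: "lev g u"
    unfolding lev_def
  proof
    fix j show "Poly_Mapping.lookup g j \<le> Poly_Mapping.lookup u j"
    proof (cases "j < n")
      case True
      have "int (Poly_Mapping.lookup g j) \<le> x j" using lg[OF True] step[OF True] by (simp add: hi_def)
      then show ?thesis by (simp add: x_def)
    next
      case False then show ?thesis by (simp add: g_def lookup_mkv)
    qed
  qed
  define w where "w = u - g"
  have uw: "u = w + g" using lev_diff[OF glev] by (simp add: w_def add.commute)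
  have lw: "int (Poly_Mapping.lookup w j) = x j - int (Poly_Mapping.lookup g j)" for j
    using uw by (simp add: x_def lookup_add)
  have psw: "int (ps w p) = S p - T p" if "p \<le> n" for p
    using psg[OF that] uw by (simp add: S_def ps_add)
  have "g \<in> Gm 1"
    unfolding Gm_def
  proof (intro CollectI conjI allI impI gN)
    fix i assume i: "i < n"
    have T': "L (Suc i) \<le> T (Suc i)" "T (Suc i) \<le> U (Suc i)" using T1 i by auto
    have "int (Poly_Mapping.lookup g i) \<le> int (b i)" using lg[OF i] step[OF i] by (simp add: hi_def)
    then show "Poly_Mapping.lookup g i \<le> 1 * b i" by simp
    have "int (\<alpha> i) \<le> int (ps g (Suc i))" using T' psg[of "Suc i"] i by (simp add: L_def)
    then show "1 * \<alpha> i \<le> ps g (Suc i)" by simp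
    have "int (ps g (Suc i)) \<le> int (\<beta> i)" using T' psg[of "Suc i"] i by (simp add: U_def)
    then show "ps g (Suc i) \<le> 1 * \<beta> i" by simp
  qed
  moreover have "w \<in> Gm m"
    unfolding Gm_def
  proof (intro CollectI conjI allI impI)
    show "w \<in> NN n" unfolding w_def by (rule NN_minus[OF uN])
    fix i assume i: "i < n"
    have T': "L (Suc i) \<le> T (Suc i)" "T (Suc i) \<le> U (Suc i)" using T1 i by auto
    have "int (Poly_Mapping.lookup w i) \<le> M * int (b i)"
      using lw[of i] lg[OF i] step[OF i] by (simp add: lo_def)
    then show "Poly_Mapping.lookup w i \<le> m * b i" by (simp add: M_def flip: of_nat_mult)
    have "M * int (\<alpha> i) \<le> int (ps w (Suc i))" using T' psw[of "Suc i"] i by (simp add: U_def)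
    then show "m * \<alpha> i \<le> ps w (Suc i)" by (simp add: M_def flip: of_nat_mult)
    have "int (ps w (Suc i)) \<le> M * int (\<beta> i)" using T' psw[of "Suc i"] i by (simp add: L_def)
    then show "ps w (Suc i) \<le> m * \<beta> i" by (simp add: M_def flip: of_nat_mult)
  qed
  ultimately show ?thesis using uw by blast
qed

end

definition vecT :: "nat \<Rightarrow> (nat \<Rightarrow> int) \<Rightarrow> nat \<Rightarrow>\<^sub>0 nat" where
  "vecT n T = mkv n (\<lambda>j. nat (T (Suc j) - T j))"

lemma vecT_NN: "vecT n T \<in> NN n" unfolding vecT_def by (rule mkv_NN)

lemma lookup_vecT: "j < n \<Longrightarrow> 0 \<le> T (Suc j) - T j \<Longrightarrow> int (Poly_Mapping.lookup (vecT n T) j) = T (Suc j) - T j"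
  by (simp add: vecT_def lookup_mkv)

lemma lookup_vecT_out: "\<not> j < n \<Longrightarrow> Poly_Mapping.lookup (vecT n T) j = 0"
  by (simp add: vecT_def lookup_mkv)

lemma ps_vecT: "T 0 = 0 \<Longrightarrow> (\<And>j. j < n \<Longrightarrow> 0 \<le> T (Suc j) - T j) \<Longrightarrow> p \<le> n \<Longrightarrow> int (ps (vecT n T) p) = T p"
proof (induction p)
  case 0 then show ?case by simp
next
  case (Suc p) then show ?case using lookup_vecT[of p n T] by (simp add: ps_Suc)
qed

lemma lookup_ev_add: "Poly_Mapping.lookup (ev i + v) j = Poly_Mapping.lookup v j + (if i = j then 1 else 0)"
  by (simp add: ev_def lookup_add lookup_single when_def)

context plp begin

lemma F2:
  assumes vN: "v \<in> NN n" and deg: "m * d \<le> ps v n" and sat: "\<forall>i<n. ev i + v \<in> Up n (Gm m)"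
  shows "v \<in> Up n (Gm m)"
proof -
  define M where "M = int m"
  define x where "x j = int (Poly_Mapping.lookup v j)" for j
  define L where "L p = (if p = 0 then 0 else M * int (\<alpha> (p-1)))" for p
  define U where "U p = (if p = 0 then 0 else M * int (\<beta> (p-1)))" for p
  define lo where "lo (p::nat) = (0::int)" for p
  define hi where "hi p = min (x (p-1)) (M * int (b (p-1)))" for p
  have M0: "M \<ge> 0" by (simp add: M_def)
  have getg: "\<exists>g\<in>Gm m. lev g (ev i + v)" if "i < n" for i
    using sat that unfolding Up_def by blast
  obtain T where T1: "\<forall>p\<le>n. L p \<le> T p \<and> T p \<le> U p"
    and T2: "\<forall>p. 1 \<le> p \<and> p \<le> n \<longrightarrow> lo p \<le> T p - T (p - 1) \<and> T p - T (p - 1) \<le> hi p"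
  proof (atomize_elim, rule chain_feasible)
    fix p assume p: "p \<le> n"
    show "L p \<le> U p"
    proof (cases "p = 0")
      case False
      then have "\<alpha> (p-1) \<le> \<beta> (p-1)" using ab[of "p-1"] p by simp
      then show ?thesis using False M0 by (simp add: L_def U_def mult_left_mono)
    qed (simp add: L_def U_def)
  next
    fix p assume "1 \<le> p" "p \<le> n"
    show "lo p \<le> hi p" by (simp add: lo_def hi_def x_def M_def)
  next
    fix a c assume ac: "a < c" "c \<le> n"
    have "L a \<le> U c"
    proof (cases "a = 0")
      case True then show ?thesis using ac by (simp add: L_def U_def M_def)
    next
      case False
      then have "\<alpha> (a-1) \<le> \<alpha> (c-1)" using am'[of "a-1" "c-1"] ac by simp
      also have "\<dots> \<le> \<beta> (c-1)" using ab[of "c-1"] ac by simp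
      finally show ?thesis using False ac M0 by (simp add: L_def U_def mult_left_mono)
    qed
    then show "L a + sum lo {a<..c} \<le> U c" by (simp add: lo_def)
  next
    fix a c assume ac: "a < c" "c \<le> n"
    have Lc: "L c = M * int (\<alpha> (c-1))" using ac by (simp add: L_def)
    show "L c \<le> U a + sum hi {a<..c}"
    proof (cases "a = 0 \<and> c = n \<and> (\<forall>j<n. Poly_Mapping.lookup v j < m * b j)")
      case True
      then have "hi p = x (p-1)" if "p \<in> {a<..c}" for p
      proof -
        have "p - 1 < n" using that True by auto
        then have "x (p-1) \<le> M * int (b (p-1))" using True
          by (simp add: x_def M_def flip: of_nat_mult) (meson less_imp_le_nat)
        then show ?thesis by (simp add: hi_def)
      qed
      then have "sum hi {a<..c} = (\<Sum>p\<in>{a<..c}. x (p-1))" by simp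
      also have "\<dots> = int (ps v n)" using ps_ivl[of 0 n v] True by (simp add: x_def)
      finally have "sum hi {a<..c} = int (ps v n)" .
      moreover have "L c = int m * int d" using Lc True an by (simp add: M_def)
      moreover have "int m * int d \<le> int (ps v n)" using deg by (metis of_nat_le_iff of_nat_mult)
      moreover have "U a = 0" using True by (simp add: U_def)
      ultimately show ?thesis by linarith
    next
      case False
      have "\<exists>g\<in>Gm m. \<forall>j. a \<le> j \<and> j < c \<longrightarrow> Poly_Mapping.lookup g j \<le> Poly_Mapping.lookup v j"
      proof (cases "\<exists>j0<n. m * b j0 \<le> Poly_Mapping.lookup v j0")
        case True
        then obtain j0 where j0: "j0 < n" "m * b j0 \<le> Poly_Mapping.lookup v j0" by blast
        obtain g where g: "g \<in> Gm m" "lev g (ev j0 + v)" using getg[OF j0(1)] by blast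
        have "Poly_Mapping.lookup g j \<le> Poly_Mapping.lookup v j" if "a \<le> j \<and> j < c" for j
        proof (cases "j = j0")
          case True
          then have "Poly_Mapping.lookup g j \<le> m * b j" using g(1) j0(1) unfolding Gm_def by blast
          then show ?thesis using j0 True by simp
        next
          case False
          have "Poly_Mapping.lookup g j \<le> Poly_Mapping.lookup (ev j0 + v) j" using g(2) unfolding lev_def by blast
          then show ?thesis using False by (simp add: lookup_ev_add)
        qed
        then show ?thesis using g(1) by blast
      next
        case nj: False
        then have "a \<noteq> 0 \<or> c \<noteq> n" using False by auto
        define i where "i = (if a \<noteq> 0 then 0 else n - 1)"
        have i: "i < n" "\<And>j. a \<le> j \<Longrightarrow> j < c \<Longrightarrow> j \<noteq> i"
          using \<open>a \<noteq> 0 \<or> c \<noteq> n\<close> ac n1 by (auto simp: i_def)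
        obtain g where g: "g \<in> Gm m" "lev g (ev i + v)" using getg[OF i(1)] by blast
        have "Poly_Mapping.lookup g j \<le> Poly_Mapping.lookup v j" if "a \<le> j \<and> j < c" for j
        proof -
          have "Poly_Mapping.lookup g j \<le> Poly_Mapping.lookup (ev i + v) j" using g(2) unfolding lev_def by blast
          moreover have "i \<noteq> j" using i(2)[of j] that by auto
          ultimately show ?thesis by (simp add: lookup_ev_add)
        qed
        then show ?thesis using g(1) by blast
      qed
      then obtain g where g: "g \<in> Gm m" "\<And>j. a \<le> j \<Longrightarrow> j < c \<Longrightarrow> Poly_Mapping.lookup g j \<le> Poly_Mapping.lookup v j"
        by blast
      have "int (ps g c) - int (ps g a) = (\<Sum>p\<in>{a<..c}. int (Poly_Mapping.lookup g (p - 1)))"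
        using ps_ivl[of a c g] ac by simp
      also have "\<dots> \<le> sum hi {a<..c}"
      proof (rule sum_mono)
        fix p assume p: "p \<in> {a<..c}"
        then have "p - 1 < n" using ac by auto
        then have "Poly_Mapping.lookup g (p-1) \<le> m * b (p-1)" using g(1) unfolding Gm_def by blast
        moreover have "Poly_Mapping.lookup g (p-1) \<le> Poly_Mapping.lookup v (p-1)" using g(2) p by auto
        ultimately show "int (Poly_Mapping.lookup g (p - 1)) \<le> hi p"
          by (simp add: hi_def x_def M_def flip: of_nat_mult)
      qed
      finally have 1: "int (ps g c) - int (ps g a) \<le> sum hi {a<..c}" .
      have "c - 1 < n" using ac by simp
      then have "m * \<alpha> (c-1) \<le> ps g (Suc (c-1))" using g(1) unfolding Gm_def by blast
      moreover have "Suc (c - 1) = c" using ac by simp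
      ultimately have "m * \<alpha> (c-1) \<le> ps g c" by metis
      then have 2: "L c \<le> int (ps g c)" using Lc ac by (simp add: M_def flip: of_nat_mult)
      have 3: "int (ps g a) \<le> U a"
      proof (cases "a = 0")
        case False
        have "a - 1 < n" using ac by simp
        then have "ps g (Suc (a-1)) \<le> m * \<beta> (a-1)" using g(1) unfolding Gm_def by blast
        moreover have "Suc (a - 1) = a" using False by simp
        ultimately have "ps g a \<le> m * \<beta> (a-1)" by metis
        then show ?thesis using False by (simp add: U_def M_def flip: of_nat_mult)
      qed (simp add: U_def)
      show ?thesis using 1 2 3 by linarith
    qed
  qed
  have T0: "T 0 = 0" using T1 by (auto simp: L_def U_def)
  have step: "0 \<le> T (Suc j) - T j \<and> T (Suc j) - T j \<le> hi (Suc j)" if "j < n" for j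
    using T2[rule_format, of "Suc j"] that by (simp add: lo_def)
  define g where "g = vecT n T"
  have lg: "int (Poly_Mapping.lookup g j) = T (Suc j) - T j" if "j < n" for j
    using lookup_vecT[OF that] step[OF that] by (simp add: g_def)
  have st0: "\<And>j. j < n \<Longrightarrow> 0 \<le> T (Suc j) - T j" using step by blast
  have psg: "int (ps g p) = T p" if "p \<le> n" for p
    unfolding g_def by (rule ps_vecT[OF T0 st0 that])
  have "lev g v"
    unfolding lev_def
  proof
    fix j show "Poly_Mapping.lookup g j \<le> Poly_Mapping.lookup v j"
    proof (cases "j < n")
      case True
      have "int (Poly_Mapping.lookup g j) \<le> x j" using lg[OF True] step[OF True] by (simp add: hi_def)
      then show ?thesis by (simp add: x_def)
    qed (simp add: g_def lookup_vecT_out)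
  qed
  moreover have "g \<in> Gm m"
    unfolding Gm_def
  proof (intro CollectI conjI allI impI)
    show "g \<in> NN n" unfolding g_def by (rule vecT_NN)
    fix i assume i: "i < n"
    have T': "L (Suc i) \<le> T (Suc i)" "T (Suc i) \<le> U (Suc i)" using T1 i by auto
    have "int (Poly_Mapping.lookup g i) \<le> M * int (b i)" using lg[OF i] step[OF i] by (simp add: hi_def)
    then show "Poly_Mapping.lookup g i \<le> m * b i" by (simp add: M_def flip: of_nat_mult)
    have "M * int (\<alpha> i) \<le> int (ps g (Suc i))" using T' psg[of "Suc i"] i by (simp add: L_def)
    then show "m * \<alpha> i \<le> ps g (Suc i)" by (simp add: M_def flip: of_nat_mult)
    have "int (ps g (Suc i)) \<le> M * int (\<beta> i)" using T' psg[of "Suc i"] i by (simp add: U_def)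
    then show "ps g (Suc i) \<le> m * \<beta> i" by (simp add: M_def flip: of_nat_mult)
  qed
  ultimately show ?thesis using vN unfolding Up_def by blast
qed

end

context plp begin

lemma F3:
  assumes nk: "n \<le> Suc k" and n2: "2 \<le> n" and uN: "u \<in> NN n" and deg: "ps u n + 1 = Suc k * d"
    and soc: "\<forall>i<n. ev i + u \<in> Gm (Suc k)"
  shows "\<exists>g w. g \<in> Gm 1 \<and> w \<in> NN n \<and> ps w n + 1 = k * d \<and> (\<forall>i<n. ev i + w \<in> Gm k) \<and> u = w + g"
proof -
  define K where "K = int k"
  define S where "S p = int (ps u p)" for p
  define x where "x j = int (Poly_Mapping.lookup u j)" for j
  have K1: "K \<ge> 1" using nk n2 by (simp add: K_def)
  have K0: "K \<ge> 0" "K + 1 > 0" using K1 by auto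
  have nK: "int n \<le> K + 1" using nk by (simp add: K_def)
  have xb: "x j + 1 \<le> (K+1) * int (b j)" if j: "j < n" for j
  proof -
    have "Poly_Mapping.lookup (ev j + u) j \<le> Suc k * b j" using soc j unfolding Gm_def by blast
    then have "Poly_Mapping.lookup u j + 1 \<le> Suc k * b j" by (simp add: lookup_ev_add)
    then have "int (Poly_Mapping.lookup u j + 1) \<le> int (Suc k * b j)" by (simp only: of_nat_le_iff)
    then show ?thesis by (simp add: x_def K_def algebra_simps)
  qed
  have Sa: "(K+1) * int (\<alpha> i) \<le> S (Suc i)" if i: "Suc i < n" for i
  proof -
    have "n - 1 < n" using n2 by simp
    then have "Suc k * \<alpha> i \<le> ps (ev (n-1) + u) (Suc i)" using soc i unfolding Gm_def by auto
    moreover have "\<not> n - 1 < Suc i" using i by simp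
    ultimately have "Suc k * \<alpha> i \<le> ps u (Suc i)" by (simp only: ps_ev if_False)
    then have "int (Suc k * \<alpha> i) \<le> int (ps u (Suc i))" by (simp only: of_nat_le_iff)
    then show ?thesis by (simp add: S_def K_def algebra_simps)
  qed
  have Sb: "S (Suc i) + 1 \<le> (K+1) * int (\<beta> i)" if i: "Suc i < n" for i
  proof -
    have "0 < n" using n2 by simp
    then have "ps (ev 0 + u) (Suc i) \<le> Suc k * \<beta> i" using soc i unfolding Gm_def by auto
    then have "ps u (Suc i) + 1 \<le> Suc k * \<beta> i" by (simp add: ps_ev)
    then have "int (ps u (Suc i) + 1) \<le> int (Suc k * \<beta> i)" by (simp only: of_nat_le_iff)
    then show ?thesis by (simp add: S_def K_def algebra_simps)
  qed
  have Sn: "S n + 1 = (K+1) * int d"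
  proof -
    have "int (ps u n + 1) = int (Suc k * d)" using deg by simp
    then show ?thesis by (simp add: S_def K_def algebra_simps)
  qed
  define L where "L p = (if p = 0 then 0 else if p = n then int d else max (int (\<alpha> (p-1))) (S p + 1 - K * int (\<beta> (p-1))))" for p
  define U where "U p = (if p = 0 then 0 else if p = n then int d else min (int (\<beta> (p-1))) (S p - K * int (\<alpha> (p-1))))" for p
  define lo where "lo p = max 0 (x (p-1) + 1 - K * int (b (p-1)))" for p
  define hi where "hi p = min (int (b (p-1))) (x (p-1))" for p
  have S0: "S 0 = 0" by (simp add: S_def)
  have Sd: "S c - S a = (\<Sum>p\<in>{a<..c}. x (p - 1))" if "a \<le> c" for a c
    unfolding S_def x_def using ps_ivl[OF that] .
  have bL: "(K+1) * L p \<le> S p + (if 0 < p then 1 else 0)" if pn: "p \<le> n" for p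
  proof -
    consider "p = 0" | "p = n" | "0 < p" "p < n" using pn by linarith
    then show ?thesis
    proof cases
      case 1 then show ?thesis by (simp add: L_def S0)
    next
      case 2 then show ?thesis using Sn n2 by (simp add: L_def)
    next
      case 3
      then obtain i where i: "p = Suc i" "Suc i < n" by (cases p) auto
      have "(K+1) * int (\<alpha> i) \<le> S p" using Sa[OF i(2)] i by simp
      moreover have "(K+1) * (S p + 1 - K * int (\<beta> i)) \<le> S p + 1"
        using scale_low[OF K0(1), of "S p + 1" "int (\<beta> i)"] Sb[OF i(2)] i by simp
      ultimately show ?thesis using i by (simp add: L_def max_def)
    qed
  qed
  have bU: "S p + (if p = n then 1 else 0) \<le> (K+1) * U p" if pn: "p \<le> n" for p
  proof -
    consider "p = 0" | "p = n" | "0 < p" "p < n" using pn by linarith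
    then show ?thesis
    proof cases
      case 1 then show ?thesis using n2 by (simp add: U_def S0)
    next
      case 2 then show ?thesis using Sn n2 by (simp add: U_def)
    next
      case 3
      then obtain i where i: "p = Suc i" "Suc i < n" by (cases p) auto
      have "S p \<le> (K+1) * int (\<beta> i)" using Sb[OF i(2)] i by simp
      moreover have "S p \<le> (K+1) * (S p - K * int (\<alpha> i))"
        using scale_up[OF K0(1), of "int (\<alpha> i)" "S p"] Sa[OF i(2)] i by simp
      ultimately show ?thesis using i 3 by (simp add: U_def min_def)
    qed
  qed
  have blo: "(K+1) * lo p \<le> x (p-1) + 1" if "1 \<le> p" "p \<le> n" for p
  proof -
    have "(K+1) * (x (p-1) + 1 - K * int (b (p-1))) \<le> x (p-1) + 1"
      using scale_low[OF K0(1), of "x (p-1) + 1" "int (b (p-1))"] xb[of "p-1"] that by simp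
    moreover have "0 \<le> x (p-1) + 1" by (simp add: x_def)
    ultimately show ?thesis by (simp add: lo_def max_def)
  qed
  have bhi: "x (p-1) \<le> (K+1) * hi p" if "1 \<le> p" "p \<le> n" for p
  proof -
    have "p - 1 < n" using that by simp
    then have "x (p-1) \<le> (K+1) * int (b (p-1))" using xb[of "p-1"] by simp
    moreover have "x (p-1) \<le> (K+1) * x (p-1)" using K0 by (simp add: x_def algebra_simps)
    ultimately show ?thesis by (simp add: hi_def min_def)
  qed
  have sum1: "(\<Sum>p\<in>{a<..c}. (1::int)) = int c - int a" if "a \<le> c" for a c
    using that by simp
  obtain T where T1: "\<forall>p\<le>n. L p \<le> T p \<and> T p \<le> U p"
    and T2: "\<forall>p. 1 \<le> p \<and> p \<le> n \<longrightarrow> lo p \<le> T p - T (p - 1) \<and> T p - T (p - 1) \<le> hi p"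
  proof (atomize_elim, rule chain_feasible)
    fix p assume p: "p \<le> n"
    have "(K+1) * L p \<le> (K+1) * U p + ((K+1) - 1)"
      using bL[OF p] bU[OF p] K1 by (auto split: if_splits)
    then show "L p \<le> U p" using cancel_slack K0 by blast
  next
    fix p assume p: "1 \<le> p" "p \<le> n"
    have "(K+1) * lo p \<le> (K+1) * hi p + ((K+1) - 1)" using blo[OF p] bhi[OF p] K1 by linarith
    then show "lo p \<le> hi p" using cancel_slack K0 by blast
  next
    fix a c assume ac: "a < c" "c \<le> n"
    have slack: "(if 0 < a then 1 else 0) + (int c - int a) \<le> (if c = n then 1 else 0) + K"
      using nK ac by (cases "a = 0"; cases "c = n") auto
    have "(K+1) * (L a + sum lo {a<..c}) = (K+1) * L a + (\<Sum>p\<in>{a<..c}. (K+1) * lo p)"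
      by (simp add: algebra_simps sum_distrib_left)
    also have "\<dots> \<le> (S a + (if 0 < a then 1 else 0)) + (\<Sum>p\<in>{a<..c}. x (p-1) + 1)"
      using bL[of a] ac by (intro add_mono sum_mono blo) auto
    also have "\<dots> = S a + (if 0 < a then 1 else 0) + (S c - S a) + (int c - int a)"
      using Sd[of a c] sum1[of a c] ac by (simp add: sum.distrib)
    also have "\<dots> \<le> S c + (if c = n then 1 else 0) + K" using slack by linarith
    also have "\<dots> \<le> (K+1) * U c + ((K+1) - 1)" using bU[of c] ac by simp
    finally show "L a + sum lo {a<..c} \<le> U c" using cancel_slack K0 by blast
  next
    fix a c assume ac: "a < c" "c \<le> n"
    have "(K+1) * L c \<le> S c + 1" using bL[of c] ac by simp
    also have "\<dots> = S a + (\<Sum>p\<in>{a<..c}. x (p-1)) + 1" using Sd[of a c] ac by simp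
    also have "\<dots> \<le> (K+1) * U a + (\<Sum>p\<in>{a<..c}. (K+1) * hi p) + 1"
      using bU[of a] ac by (intro add_mono sum_mono bhi) (auto split: if_splits)
    also have "\<dots> \<le> (K+1) * (U a + sum hi {a<..c}) + ((K+1) - 1)"
      using K1 by (simp add: algebra_simps sum_distrib_left)
    finally show "L c \<le> U a + sum hi {a<..c}" using cancel_slack K0 by blast
  qed
  have T0: "T 0 = 0" using T1 by (auto simp: L_def U_def)
  have Tn: "T n = int d" using T1 n2 by (auto simp: L_def U_def)
  have step: "lo (Suc j) \<le> T (Suc j) - T j \<and> T (Suc j) - T j \<le> hi (Suc j)" if "j < n" for j
    using T2[rule_format, of "Suc j"] that by simp
  have st0: "\<And>j. j < n \<Longrightarrow> 0 \<le> T (Suc j) - T j"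
  proof -
    fix j assume "j < n"
    then have "lo (Suc j) \<le> T (Suc j) - T j" using step by blast
    moreover have "0 \<le> lo (Suc j)" by (simp add: lo_def)
    ultimately show "0 \<le> T (Suc j) - T j" by linarith
  qed
  define g where "g = vecT n T"
  have lg: "int (Poly_Mapping.lookup g j) = T (Suc j) - T j" if "j < n" for j
    using lookup_vecT[OF that st0[OF that]] by (simp add: g_def)
  have psg: "int (ps g p) = T p" if "p \<le> n" for p
    unfolding g_def by (rule ps_vecT[OF T0 st0 that])
  have gN: "g \<in> NN n" unfolding g_def by (rule vecT_NN)
  have glev: "lev g u"
    unfolding lev_def
  proof
    fix j show "Poly_Mapping.lookup g j \<le> Poly_Mapping.lookup u j"
    proof (cases "j < n")
      case True
      have "int (Poly_Mapping.lookup g j) \<le> x j" using lg[OF True] step[OF True] by (simp add: hi_def)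
      then show ?thesis by (simp add: x_def)
    qed (simp add: g_def lookup_vecT_out)
  qed
  define w where "w = u - g"
  have uw: "u = w + g" using lev_diff[OF glev] by (simp add: w_def add.commute)
  have lw: "int (Poly_Mapping.lookup w j) = x j - int (Poly_Mapping.lookup g j)" for j
    using uw by (simp add: x_def lookup_add)
  have psw: "int (ps w p) = S p - T p" if "p \<le> n" for p
    using psg[OF that] uw by (simp add: S_def ps_add)
  have wN: "w \<in> NN n" unfolding w_def by (rule NN_minus[OF uN])
  have aL: "int (\<alpha> i) \<le> L (Suc i)" "U (Suc i) \<le> int (\<beta> i)" if i: "i < n" for i
  proof -
    have "int (\<alpha> i) \<le> L (Suc i) \<and> U (Suc i) \<le> int (\<beta> i)"
    proof (cases "Suc i = n")
      case True
      then have "i = n - 1" by simp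
      then show ?thesis using True an bn by (simp add: L_def U_def)
    next
      case False
      then show ?thesis by (simp add: L_def U_def)
    qed
    then show "int (\<alpha> i) \<le> L (Suc i)" "U (Suc i) \<le> int (\<beta> i)" by auto
  qed
  have "g \<in> Gm 1"
    unfolding Gm_def
  proof (intro CollectI conjI allI impI gN)
    fix i assume i: "i < n"
    have T': "L (Suc i) \<le> T (Suc i)" "T (Suc i) \<le> U (Suc i)" using T1 i by auto
    have "int (Poly_Mapping.lookup g i) \<le> int (b i)" using lg[OF i] step[OF i] by (simp add: hi_def)
    then show "Poly_Mapping.lookup g i \<le> 1 * b i" by simp
    have "int (\<alpha> i) \<le> int (ps g (Suc i))" using T' psg[of "Suc i"] i aL[OF i] by simp
    then show "1 * \<alpha> i \<le> ps g (Suc i)" by simp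
    have "int (ps g (Suc i)) \<le> int (\<beta> i)" using T' psg[of "Suc i"] i aL[OF i] by simp
    then show "ps g (Suc i) \<le> 1 * \<beta> i" by simp
  qed
  moreover have degw: "ps w n + 1 = k * d"
  proof -
    have "int (ps w n + 1) = K * int d" using psw[of n] Tn Sn by (simp add: algebra_simps)
    then have "int (ps w n + 1) = int (k * d)" by (simp add: K_def)
    then show ?thesis by (simp only: of_nat_eq_iff)
  qed
  moreover have "\<forall>i<n. ev i + w \<in> Gm k"
  proof (intro allI impI)
    fix i assume i: "i < n"
    show "ev i + w \<in> Gm k"
      unfolding Gm_def
    proof (intro CollectI conjI allI impI)
      show "ev i + w \<in> NN n" by (rule NN_add[OF ev_NN[OF i] wN])
      fix j assume j: "j < n"
      have "int (Poly_Mapping.lookup w j) + 1 \<le> K * int (b j)"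
        using lw[of j] lg[OF j] step[OF j] by (simp add: lo_def)
      then have "int (Poly_Mapping.lookup w j + 1) \<le> int (k * b j)" by (simp add: K_def)
      then have "Poly_Mapping.lookup w j + 1 \<le> k * b j" by (simp only: of_nat_le_iff)
      then show "Poly_Mapping.lookup (ev i + w) j \<le> k * b j" by (simp add: lookup_ev_add)
      have "k * \<alpha> j \<le> ps (ev i + w) (Suc j) \<and> ps (ev i + w) (Suc j) \<le> k * \<beta> j"
      proof (cases "Suc j = n")
        case True
        then have "j = n - 1" by simp
        then have "\<alpha> j = d" "\<beta> j = d" using an bn by auto
        moreover have "ps (ev i + w) (Suc j) = ps w n + 1" using True i by (simp add: ps_ev)
        ultimately show ?thesis using degw by simp
      next
        case False
        then have sj: "Suc j < n" "Suc j \<le> n" using j by auto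
        have T': "L (Suc j) \<le> T (Suc j)" "T (Suc j) \<le> U (Suc j)" using T1 sj by auto
        have "K * int (\<alpha> j) \<le> int (ps w (Suc j))"
          using T' psw[OF sj(2)] False by (simp add: U_def)
        then have 1: "k * \<alpha> j \<le> ps w (Suc j)" by (simp add: K_def flip: of_nat_mult)
        have "int (ps w (Suc j)) + 1 \<le> K * int (\<beta> j)"
          using T' psw[OF sj(2)] False by (simp add: L_def)
        then have "int (ps w (Suc j) + 1) \<le> int (k * \<beta> j)" by (simp add: K_def)
        then have 2: "ps w (Suc j) + 1 \<le> k * \<beta> j" by (simp only: of_nat_le_iff)
        show ?thesis using 1 2 by (simp add: ps_ev)
      qed
      then show "k * \<alpha> j \<le> ps (ev i + w) (Suc j)" "ps (ev i + w) (Suc j) \<le> k * \<beta> j" by auto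
    qed
  qed
  ultimately show ?thesis using wN uw by blast
qed

end

lemma Up_msum:
  assumes "A \<subseteq> NN n" "B \<subseteq> NN n"
  shows "msum (Up n A) (Up n B) = Up n (msum A B)"
proof
  show "msum (Up n A) (Up n B) \<subseteq> Up n (msum A B)"
  proof
    fix x assume "x \<in> msum (Up n A) (Up n B)"
    then obtain u v where uv: "x = u + v" "u \<in> Up n A" "v \<in> Up n B" unfolding msum_def by blast
    then obtain a c where ac: "a \<in> A" "lev a u" "c \<in> B" "lev c v" "u \<in> NN n" "v \<in> NN n" unfolding Up_def by blast
    have "x \<in> NN n" using uv(1) ac NN_add by blast
    moreover have "a + c \<in> msum A B" using ac unfolding msum_def by blast
    moreover have "lev (a + c) x" using uv(1) lev_add ac by blast
    ultimately show "x \<in> Up n (msum A B)" unfolding Up_def by blast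
  qed
next
  show "Up n (msum A B) \<subseteq> msum (Up n A) (Up n B)"
  proof
    fix x assume "x \<in> Up n (msum A B)"
    then obtain a c where ac: "a \<in> A" "c \<in> B" "lev (a + c) x" "x \<in> NN n" unfolding Up_def msum_def by blast
    have x: "x = (a + (x - (a + c))) + c" using lev_diff[OF ac(3)] by (simp add: ac_simps)
    have "a + (x - (a + c)) \<in> Up n A"
      unfolding Up_def using ac(1) assms(1) NN_add NN_minus[OF ac(4)] lev_addR by blast
    moreover have "c \<in> Up n B" unfolding Up_def using ac(2) assms(2) lev_refl by blast
    ultimately show "x \<in> msum (Up n A) (Up n B)" using x unfolding msum_def by blast
  qed
qed

context plp begin

definition Pw :: "nat \<Rightarrow> (nat \<Rightarrow>\<^sub>0 nat) set" where "Pw m = Up n (Gm m)"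

definition Sm :: "nat \<Rightarrow> (nat \<Rightarrow>\<^sub>0 nat) set" where
  "Sm m = {u \<in> NN n. ps u n + 1 = m * d \<and> (\<forall>i<n. ev i + u \<in> Pw m)}"

lemma upc_Pw: "upc n (Pw m)" unfolding Pw_def by (rule upc_Up)

lemma Gm_msum: "msum (Gm m) (Gm 1) = Gm (Suc m)"
proof
  show "msum (Gm m) (Gm 1) \<subseteq> Gm (Suc m)" unfolding msum_def using Gm_add by fastforce
  show "Gm (Suc m) \<subseteq> msum (Gm m) (Gm 1)" unfolding msum_def using F1 by blast
qed

lemma zero_Gm0: "0 \<in> Gm 0" unfolding Gm_def NN_def by (simp add: ps_def)

lemma lev_zero: "lev 0 v" by (simp add: lev_def)

lemma Pw0: "Pw 0 = NN n"
  unfolding Pw_def Up_def using zero_Gm0 lev_zero by blast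

lemma Pw_Suc: "Pw (Suc m) = msum (Pw m) (Pw 1)"
  unfolding Pw_def Up_msum[OF Gm_NN Gm_NN] Gm_msum ..

lemma Pw_add: "msum (Pw a) (Pw c) \<subseteq> Pw (a + c)"
  unfolding Pw_def Up_msum[OF Gm_NN Gm_NN]
  unfolding Up_def msum_def using Gm_add by blast

lemma Pw_deg: "v \<in> Pw m \<Longrightarrow> m * d \<le> ps v n"
proof -
  assume "v \<in> Pw m"
  then obtain g where "g \<in> Gm m" "lev g v" unfolding Pw_def Up_def by blast
  then show ?thesis using Gm_deg[of g m] lev_ps[of g v n] by simp
qed

lemma Gm_Pw: "Gm m \<subseteq> Pw m" unfolding Pw_def Up_def using Gm_NN lev_refl by blast

lemma Pw_Gm: "v \<in> Pw m \<Longrightarrow> ps v n = m * d \<Longrightarrow> v \<in> Gm m"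
proof -
  assume v: "v \<in> Pw m" "ps v n = m * d"
  then obtain g where g: "g \<in> Gm m" "lev g v" "v \<in> NN n" unfolding Pw_def Up_def by blast
  have "g = v" using lev_eq[OF g(2) g(3)] Gm_deg[OF g(1)] v(2) by simp
  then show ?thesis using g(1) by simp
qed

lemma d0_if_n1: "n = 1 \<Longrightarrow> d = 0" using an a0 by simp

lemma Sm_decomp:
  "u \<in> Sm m \<Longrightarrow> 1 \<le> m \<Longrightarrow> \<exists>k. 1 \<le> k \<and> k \<le> m \<and> k < n \<and> u \<in> msum (Gm (m - k)) (Sm k)"
proof (induction m arbitrary: u rule: less_induct)
  case (less m)
  show ?case
  proof (cases "m < n")
    case True
    have "u = 0 + u" by simp
    then have "u \<in> msum (Gm (m - m)) (Sm m)" using zero_Gm0 less.prems(1) unfolding msum_def by force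
    then show ?thesis using True less.prems(2) by blast
  next
    case False
    have uS: "u \<in> NN n" "ps u n + 1 = m * d" "\<forall>i<n. ev i + u \<in> Pw m"
      using less.prems(1) unfolding Sm_def by auto
    have n2: "2 \<le> n"
    proof (rule ccontr)
      assume "\<not> 2 \<le> n"
      then have "n = 1" using n1 by simp
      then show False using uS(2) d0_if_n1 by simp
    qed
    obtain k' where m: "m = Suc k'" using less.prems(2) by (cases m) auto
    have nk: "n \<le> Suc k'" using False m by simp
    have soc: "\<forall>i<n. ev i + u \<in> Gm (Suc k')"
    proof (intro allI impI)
      fix i assume i: "i < n"
      have "ps (ev i + u) n = m * d" using uS(2) i by (simp add: ps_ev)
      then show "ev i + u \<in> Gm (Suc k')" using Pw_Gm uS(3) i m by simp
    qed
    obtain g w where gw: "g \<in> Gm 1" "w \<in> NN n" "ps w n + 1 = k' * d" "\<forall>i<n. ev i + w \<in> Gm k'" "u = w + g"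
      using F3[OF nk n2 uS(1)] uS(2) soc m by blast
    have wS: "w \<in> Sm k'" unfolding Sm_def using gw(2,3,4) Gm_Pw by blast
    have k'1: "1 \<le> k'" using nk n2 by simp
    obtain k where k: "1 \<le> k" "k \<le> k'" "k < n" "w \<in> msum (Gm (k' - k)) (Sm k)"
      using less.IH[of k' w] wS k'1 m by auto
    then obtain g2 s where gs: "w = g2 + s" "g2 \<in> Gm (k' - k)" "s \<in> Sm k" unfolding msum_def by blast
    have "g2 + g \<in> Gm (k' - k + 1)" using Gm_add gs(2) gw(1) by blast
    moreover have "k' - k + 1 = m - k" using k m by simp
    moreover have "u = (g2 + g) + s" using gw(5) gs(1) by (simp add: ac_simps)
    ultimately have "u \<in> msum (Gm (m - k)) (Sm k)" using gs(3) unfolding msum_def by auto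
    then show ?thesis using k m by (intro exI[of _ k]) auto
  qed
qed

lemma Sm_NN: "Sm m \<subseteq> NN n" unfolding Sm_def by blast

lemma setA:
  assumes m: "1 \<le> m"
  shows "Up n (Sm m) = (\<Union>k\<in>{k. 1 \<le> k \<and> k \<le> m \<and> k < n}. msum (Pw (m - k)) (Up n (Sm k)))"
proof
  show "Up n (Sm m) \<subseteq> (\<Union>k\<in>{k. 1 \<le> k \<and> k \<le> m \<and> k < n}. msum (Pw (m - k)) (Up n (Sm k)))"
  proof
    fix x assume "x \<in> Up n (Sm m)"
    then obtain u where u: "u \<in> Sm m" "lev u x" "x \<in> NN n" unfolding Up_def by blast
    obtain k where k: "1 \<le> k" "k \<le> m" "k < n" "u \<in> msum (Gm (m - k)) (Sm k)"
      using Sm_decomp[OF u(1) m] by blast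
    have "msum (Gm (m - k)) (Sm k) \<subseteq> msum (Pw (m - k)) (Up n (Sm k))"
      unfolding msum_def Up_def using Gm_Pw Sm_NN lev_refl by blast
    then have "u \<in> msum (Pw (m - k)) (Up n (Sm k))" using k(4) by blast
    then have "x \<in> msum (Pw (m - k)) (Up n (Sm k))"
      using upc_msum[OF upc_Pw upc_Up] u(2,3) unfolding upc_def by blast
    then show "x \<in> (\<Union>k\<in>{k. 1 \<le> k \<and> k \<le> m \<and> k < n}. msum (Pw (m - k)) (Up n (Sm k)))"
      using k by blast
  qed
next
  show "(\<Union>k\<in>{k. 1 \<le> k \<and> k \<le> m \<and> k < n}. msum (Pw (m - k)) (Up n (Sm k))) \<subseteq> Up n (Sm m)"
  proof
    fix x assume "x \<in> (\<Union>k\<in>{k. 1 \<le> k \<and> k \<le> m \<and> k < n}. msum (Pw (m - k)) (Up n (Sm k)))"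
    then obtain k p y where k: "1 \<le> k" "k \<le> m" "x = p + y" "p \<in> Pw (m - k)" "y \<in> Up n (Sm k)"
      unfolding msum_def by blast
    obtain g where g: "g \<in> Gm (m - k)" "lev g p" "p \<in> NN n" using k(4) unfolding Pw_def Up_def by blast
    obtain s where s: "s \<in> Sm k" "lev s y" "y \<in> NN n" using k(5) unfolding Up_def by blast
    have sS: "s \<in> NN n" "ps s n + 1 = k * d" "\<forall>i<n. ev i + s \<in> Pw k" using s(1) unfolding Sm_def by auto
    have "g + s \<in> Sm m"
      unfolding Sm_def
    proof (intro CollectI conjI allI impI)
      show "g + s \<in> NN n" using NN_add Gm_NN g(1) sS(1) by blast
      have "(m - k) * d + k * d = m * d" using k(2) by (simp add: add_mult_distrib[symmetric])
      then show "ps (g + s) n + 1 = m * d" using Gm_deg[OF g(1)] sS(2) by (simp add: ps_add)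
      fix i assume i: "i < n"
      have "g + (ev i + s) \<in> msum (Pw (m - k)) (Pw k)"
        using Gm_Pw g(1) sS(3) i unfolding msum_def by blast
      then have "g + (ev i + s) \<in> Pw (m - k + k)" using Pw_add by blast
      then show "ev i + (g + s) \<in> Pw m" using k(2) by (simp add: ac_simps)
    qed
    moreover have "lev (g + s) x" using lev_add[OF g(2) s(2)] k(3) by simp
    moreover have "x \<in> NN n" using k(3) g(3) s(3) NN_add by blast
    ultimately show "x \<in> Up n (Sm m)" unfolding Up_def by blast
  qed
qed

lemma setB:
  assumes m: "1 \<le> m"
  shows "Cn n (Pw m) = Pw m \<union> (\<Union>k\<in>{k. 1 \<le> k \<and> k \<le> m \<and> k < n}. msum (Pw (m - k)) (Cn n (Pw k)))"
proof
  show "Cn n (Pw m) \<subseteq> Pw m \<union> (\<Union>k\<in>{k. 1 \<le> k \<and> k \<le> m \<and> k < n}. msum (Pw (m - k)) (Cn n (Pw k)))"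
  proof
    fix v assume v: "v \<in> Cn n (Pw m)"
    show "v \<in> Pw m \<union> (\<Union>k\<in>{k. 1 \<le> k \<and> k \<le> m \<and> k < n}. msum (Pw (m - k)) (Cn n (Pw k)))"
    proof (cases "v \<in> Pw m")
      case False
      have vN: "v \<in> NN n" and sat: "\<forall>i<n. ev i + v \<in> Pw m" using v unfolding Cn_def by auto
      have "\<not> m * d \<le> ps v n" using F2[OF vN] sat False unfolding Pw_def by blast
      moreover have "m * d \<le> ps v n + 1"
      proof -
        have "0 < n" using n1 by simp
        then have "m * d \<le> ps (ev 0 + v) n" using sat Pw_deg by blast
        then show ?thesis using \<open>0 < n\<close> by (simp add: ps_ev)
      qed
      ultimately have "ps v n + 1 = m * d" by simp
      then have "v \<in> Sm m" using vN sat unfolding Sm_def by blast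
      then have "v \<in> Up n (Sm m)" unfolding Up_def using vN lev_refl by blast
      then obtain k where k: "1 \<le> k" "k \<le> m" "k < n" "v \<in> msum (Pw (m - k)) (Up n (Sm k))"
        using setA[OF m] by blast
      have "Up n (Sm k) \<subseteq> Cn n (Pw k)"
      proof -
        have "Sm k \<subseteq> Cn n (Pw k)" unfolding Sm_def Cn_def by blast
        then show ?thesis using upc_Cn[OF upc_Pw, of k] unfolding Up_def upc_def by blast
      qed
      then have "v \<in> msum (Pw (m - k)) (Cn n (Pw k))" using k(4) unfolding msum_def by blast
      then show ?thesis using k by blast
    qed simp
  qed
next
  have "Pw m \<subseteq> Cn n (Pw m)"
  proof
    fix v assume v: "v \<in> Pw m"
    have "ev i + v \<in> Pw m" if "i < n" for i
    proof -
      have "v \<in> NN n" using v upc_Pw unfolding upc_def by blast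
      then have "ev i + v \<in> NN n" using NN_add ev_NN that by blast
      then show ?thesis using v upc_Pw lev_addL unfolding upc_def by blast
    qed
    then show "v \<in> Cn n (Pw m)" using v upc_Pw unfolding Cn_def upc_def by blast
  qed
  moreover have "msum (Pw (m - k)) (Cn n (Pw k)) \<subseteq> Cn n (Pw m)" if "k \<le> m" for k
  proof
    fix x assume "x \<in> msum (Pw (m - k)) (Cn n (Pw k))"
    then obtain p c where pc: "x = p + c" "p \<in> Pw (m - k)" "c \<in> Cn n (Pw k)" unfolding msum_def by blast
    have "p \<in> NN n" using pc(2) upc_Pw unfolding upc_def by blast
    moreover have "c \<in> NN n" using pc(3) unfolding Cn_def by blast
    ultimately have xN: "x \<in> NN n" using pc(1) NN_add by blast
    have "ev i + x \<in> Pw m" if i: "i < n" for i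
    proof -
      have "p + (ev i + c) \<in> msum (Pw (m - k)) (Pw k)" using pc(2,3) i unfolding Cn_def msum_def by blast
      then have "p + (ev i + c) \<in> Pw (m - k + k)" using Pw_add by blast
      then show ?thesis using pc(1) \<open>k \<le> m\<close> by (simp add: ac_simps)
    qed
    then show "x \<in> Cn n (Pw m)" using xN unfolding Cn_def by blast
  qed
  ultimately show "Pw m \<union> (\<Union>k\<in>{k. 1 \<le> k \<and> k \<le> m \<and> k < n}. msum (Pw (m - k)) (Cn n (Pw k))) \<subseteq> Cn n (Pw m)"
    by blast
qed

end

context plp begin

lemma plp_gens:
  "{monom u | u. Poly_Mapping.keys u \<subseteq> {..<n} \<and>
      (\<forall>i<n. Poly_Mapping.lookup u i \<le> b i \<and> \<alpha> i \<le> (\<Sum>j\<le>i. Poly_Mapping.lookup u j) \<and> (\<Sum>j\<le>i. Poly_Mapping.lookup u j) \<le> \<beta> i)}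
   = (monom :: _ \<Rightarrow> 'k::field mpoly) ` Gm 1"
proof -
  have e: "(\<Sum>j\<le>i. Poly_Mapping.lookup u j) = ps u (Suc i)" for u i
    by (simp add: ps_def lessThan_Suc_atMost)
  show ?thesis unfolding e Gm_def NN_def by auto
qed

lemma I_MI: "plp_ideal n b \<alpha> \<beta> = (MI (Pw 1) :: 'k::field mpoly set)"
  unfolding plp_ideal_def plp_gens Pw_def by (rule ideal_gen_monom[OF Gm_NN])

lemma pow_MI:
  assumes "I = (MI (Pw 1) :: 'k::field mpoly set)"
  shows "ideal_pow n I m = MI (Pw m)"
proof (induction m)
  case 0 then show ?case by (simp add: Sring_MI Pw0)
next
  case (Suc m)
  have "ideal_pow n I (Suc m) = ideal_mult n (MI (Pw m)) (MI (Pw 1))" using Suc assms by simp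
  also have "\<dots> = MI (msum (Pw m) (Pw 1))" by (rule MI_mult[OF upc_Pw upc_Pw])
  also have "msum (Pw m) (Pw 1) = Pw (Suc m)" by (rule Pw_Suc[symmetric])
  finally show ?case .
qed

lemma soc_MI:
  assumes "I = (MI (Pw 1) :: 'k::field mpoly set)"
  shows "soc n d I m = MI (Up n (Sm m))"
proof -
  have "{monom u | u. Poly_Mapping.keys u \<subseteq> {..<n} \<and> mdeg u + 1 = m * d
       \<and> (\<forall>i<n. var i * monom u \<in> ideal_pow n I m)} = (monom :: _ \<Rightarrow> 'k mpoly) ` Sm m"
  proof -
    have "(Poly_Mapping.keys u \<subseteq> {..<n} \<and> mdeg u + 1 = m * d \<and> (\<forall>i<n. var i * (monom u :: 'k mpoly) \<in> ideal_pow n I m))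
        \<longleftrightarrow> u \<in> Sm m" for u
    proof -
      have "var i * (monom u :: 'k mpoly) = monom (ev i + u)" for i by (simp add: var_ev monom_mult)
      then have "(var i * (monom u :: 'k mpoly) \<in> ideal_pow n I m) \<longleftrightarrow> ev i + u \<in> Pw m" for i
        using pow_MI[OF assms] by simp
      moreover have "Poly_Mapping.keys u \<subseteq> {..<n} \<longleftrightarrow> u \<in> NN n" by (simp add: NN_def)
      moreover have "u \<in> NN n \<Longrightarrow> mdeg u = ps u n" by (rule mdeg_ps)
      ultimately show ?thesis unfolding Sm_def by auto
    qed
    then show ?thesis by blast
  qed
  then show ?thesis unfolding soc_def using ideal_gen_monom[OF Sm_NN] by simp
qed

end

theorem theorem3p7:
  fixes n d :: nat and b \<alpha> \<beta> :: "nat \<Rightarrow> nat" and I :: "'k::field mpoly set"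
  assumes "n \<ge> 1"
    and "\<And>i. i + 1 < n \<Longrightarrow> \<alpha> i \<le> \<alpha> (i + 1)"
    and "\<And>i. i + 1 < n \<Longrightarrow> \<beta> i \<le> \<beta> (i + 1)"
    and "\<alpha> (n - 1) = d" and "\<beta> (n - 1) = d"
    and "\<And>i. i < n \<Longrightarrow> \<alpha> i \<le> \<beta> i"
    and "\<alpha> 0 = 0" and "\<beta> 0 = b 0"
    and "I = plp_ideal n b \<alpha> \<beta>"
  shows "Soc_star_gen_below n d I n \<and> Soc_gen_below n I n"
proof -
  interpret plp n d b \<alpha> \<beta>
    using assms(1-8) by unfold_locales auto
  have I: "I = MI (Pw 1)" using assms(9) I_MI by simp
  let ?K = "\<lambda>m. {k. 1 \<le> k \<and> k \<le> m \<and> k < n}"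
  show ?thesis
    unfolding Soc_star_gen_below_def Soc_gen_below_def
  proof (intro conjI allI impI)
    fix m :: nat assume m: "1 \<le> m"
    have "(\<Union>k\<in>?K m. ideal_mult n (ideal_pow n I (m - k)) (soc n d I k))
        = (\<Union>k\<in>?K m. MI (msum (Pw (m - k)) (Up n (Sm k))))"
      by (rule SUP_cong) (simp_all add: pow_MI[OF I] soc_MI[OF I] MI_mult[OF upc_Pw upc_Up])
    then have "ideal_gen n (\<Union>k\<in>?K m. ideal_mult n (ideal_pow n I (m - k)) (soc n d I k))
        = MI (\<Union>k\<in>?K m. msum (Pw (m - k)) (Up n (Sm k)))"
      using MI_Union[of "?K m" n "\<lambda>k. msum (Pw (m - k)) (Up n (Sm k))"] upc_msum[OF upc_Pw upc_Up]
      by simp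
    also have "\<dots> = MI (Up n (Sm m))" using setA[OF m] by simp
    also have "\<dots> = soc n d I m" using soc_MI[OF I] by simp
    finally show "soc n d I m = ideal_gen n (\<Union>k\<in>?K m. ideal_mult n (ideal_pow n I (m - k)) (soc n d I k))"
      by simp
  next
    fix m :: nat assume m: "1 \<le> m"
    have colon: "ideal_colon n (ideal_pow n I j) (max_ideal n) = MI (Cn n (Pw j))" for j
      using pow_MI[OF I] colon_MI[OF upc_Pw] by simp
    have "(\<Union>k\<in>?K m. ideal_mult n (ideal_pow n I (m - k)) (ideal_colon n (ideal_pow n I k) (max_ideal n)))
        = (\<Union>k\<in>?K m. MI (msum (Pw (m - k)) (Cn n (Pw k))))"
      by (rule SUP_cong) (simp_all add: pow_MI[OF I] colon_MI[OF upc_Pw] MI_mult[OF upc_Pw upc_Cn[OF upc_Pw]])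
    then have "ideal_gen n (ideal_pow n I m \<union> (\<Union>k\<in>?K m. ideal_mult n (ideal_pow n I (m - k)) (ideal_colon n (ideal_pow n I k) (max_ideal n))))
        = MI (Pw m \<union> (\<Union>k\<in>?K m. msum (Pw (m - k)) (Cn n (Pw k))))"
      using MI_Union2[of n "Pw m" "?K m" "\<lambda>k. msum (Pw (m - k)) (Cn n (Pw k))"]
        upc_msum[OF upc_Pw upc_Cn[OF upc_Pw]] upc_Pw pow_MI[OF I]
      by simp
    also have "\<dots> = MI (Cn n (Pw m))" using setB[OF m] by simp
    also have "\<dots> = ideal_colon n (ideal_pow n I m) (max_ideal n)" using colon by simp
    finally show "ideal_colon n (ideal_pow n I m) (max_ideal n) = ideal_gen n (ideal_pow n I m \<union>
         (\<Union>k\<in>?K m. ideal_mult n (ideal_pow n I (m - k)) (ideal_colon n (ideal_pow n I k) (max_ideal n))))"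
      by simp
  qed
qed

end
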